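(* Let $S$ be a ring, $R$ a noetherian $S$-algebra, $\boldsymbol a=(a_1,\dots,a_n)$ and $\boldsymbol b=(b_1,\dots,b_n)$ sequences in $R$ with $\boldsymbol b$ regular, and $W=\sum_ia_ib_i$. Let $F=\bigoplus_iR\theta_i$, $\delta_+=(\sum_ib_i\theta_i^* )\lrcorner(-)$, $\delta_-=(\sum_ia_i\theta_i)\wedge(-)$ on $\bigwedge F$, and $\pi:(\bigwedge F,\delta_+)\to R/(\boldsymbol b)$ the projection onto $\bigwedge^0F=R$ followed by the quotient map. Suppose given an $S$-linear morphism of complexes $\sigma:R/(\boldsymbol b)\to(\bigwedge F,\delta_+)$ and an $S$-linear map $h$ on $\bigwedge F$ of degree $-1$ with $\delta_+h+h\delta_+=1-\sigma\pi$, $h^2=0$ and $h\sigma=0$. Let $X$ be a finite-rank matrix factorisation of $V\in R$ over $R$ such that $V+W$ lies in the image of the structure map $S\to R$; extend $h,\sigma$ to $S$-linear maps on/between $X\otimes_R\bigwedge F$ and $X\otimes_RR/(\boldsymbol b)$ using a homogeneous $R$-basis of $X$ (with Koszul signs), and set $\mu=d_X\otimes1+1\otimes\delta_-$ and $\sigma_\infty=\sum_{m\ge0}(-1)^m(h\mu)^m\sigma$. Then there is a deformation retract datum of linear factorisations of $V+W$ over $S$ $$(X\otimes_RR/(\boldsymbol b),\,d_X\otimes1)\ \underset{1\otimes\pi}{\overset{\sigma_\infty}{\rightleftarrows}}\ (X\otimes_R\textstyle\bigwedge F,\,1\otimes\delta_++\mu),\qquad h_\infty .$$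
   Context: A linear factorisation of $U$ over a ring $T$ is a $\mathbb{Z}_2$-graded $T$-module (not necessarily free) with an odd $T$-linear differential squaring to multiplication by $U$; morphisms are even maps commuting with the differentials. The symbols $\theta_i$ have odd degree (cohomological degree $-1$), so $\bigwedge F$ is $\mathbb{Z}$-graded with $\delta_\pm$ of degree $\pm1$; $(\bigwedge F,\delta_+)$ is the Koszul complex of $\boldsymbol b$. A deformation retract datum consists of morphisms of linear factorisations $\iota:M\to L$ (here $\sigma_\infty$) and $p:L\to M$ (here $1\otimes\pi$) with $p\iota=1_M$, together with an odd map $h_\infty$ on $L$ with $d_Lh_\infty+h_\infty d_L=1-\iota p$. *)

theory Defs
  imports Main "HOL-Library.Function_Algebras"
begin

definition is_ideal :: "'r::comm_ring_1 set \<Rightarrow> bool" where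
  "is_ideal I \<longleftrightarrow> 0 \<in> I \<and> (\<forall>x\<in>I. \<forall>y\<in>I. x + y \<in> I) \<and> (\<forall>r. \<forall>x\<in>I. r * x \<in> I)"

definition noetherian_ring :: "'r::comm_ring_1 itself \<Rightarrow> bool" where
  "noetherian_ring _ \<longleftrightarrow>
     (\<forall>I :: nat \<Rightarrow> 'r set. (\<forall>k. is_ideal (I k)) \<and> (\<forall>k. I k \<subseteq> I (Suc k))
        \<longrightarrow> (\<exists>N. \<forall>m\<ge>N. I m = I N))"

definition seq_ideal :: "(nat \<Rightarrow> 'r::comm_ring_1) \<Rightarrow> nat \<Rightarrow> 'r set" where
  "seq_ideal b k = {x. \<exists>c. x = (\<Sum>i<k. c i * b i)}"

definition regular_seq :: "(nat \<Rightarrow> 'r::comm_ring_1) \<Rightarrow> nat \<Rightarrow> bool" where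
  "regular_seq b n \<longleftrightarrow>
     (\<forall>i<n. \<forall>x. b i * x \<in> seq_ideal b i \<longrightarrow> x \<in> seq_ideal b i) \<and> 1 \<notin> seq_ideal b n"

definition ring_hom_into :: "('s::comm_ring_1 \<Rightarrow> 'r::comm_ring_1) \<Rightarrow> bool" where
  "ring_hom_into \<phi> \<longleftrightarrow> \<phi> 1 = 1 \<and> (\<forall>x y. \<phi> (x + y) = \<phi> x + \<phi> y) \<and> (\<forall>x y. \<phi> (x * y) = \<phi> x * \<phi> y)"

text \<open>An element of the exterior algebra is a coefficient function on finite subsets
  I of {0..<n}; I stands for theta_{i1} wedge ... wedge theta_{ik}, i1 < ... < ik,
  which lies in cohomological degree -card I.\<close>

definition ext_carrier :: "nat \<Rightarrow> (nat set \<Rightarrow> 'r::zero) set" where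
  "ext_carrier n = {\<omega>. \<forall>I. \<not> I \<subseteq> {..<n} \<longrightarrow> \<omega> I = 0}"

text \<open>theta_i wedge theta_I = ext_sign i I * theta_{I + i}  (i not in I), and
  theta_i^* contracted into theta_I = ext_sign i (I - i) * theta_{I - i}  (i in I).\<close>
definition ext_sign :: "nat \<Rightarrow> nat set \<Rightarrow> 'r::comm_ring_1" where
  "ext_sign i I = (-1) ^ card {j\<in>I. j < i}"

text \<open>delta_plus = (sum_i b_i theta_i^*) contracted into (-).\<close>
definition delta_plus :: "nat \<Rightarrow> (nat \<Rightarrow> 'r::comm_ring_1) \<Rightarrow> (nat set \<Rightarrow> 'r) \<Rightarrow> nat set \<Rightarrow> 'r" where
  "delta_plus n b \<omega> = (\<lambda>J. if J \<subseteq> {..<n}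
       then (\<Sum>i\<in>{..<n} - J. b i * ext_sign i J * \<omega> (insert i J)) else 0)"

text \<open>delta_minus = (sum_i a_i theta_i) wedge (-).\<close>
definition delta_minus :: "nat \<Rightarrow> (nat \<Rightarrow> 'r::comm_ring_1) \<Rightarrow> (nat set \<Rightarrow> 'r) \<Rightarrow> nat set \<Rightarrow> 'r" where
  "delta_minus n a \<omega> = (\<lambda>J. if J \<subseteq> {..<n}
       then (\<Sum>i\<in>J. a i * ext_sign i (J - {i}) * \<omega> (J - {i})) else 0)"

text \<open>Projection onto wedge^0 F = R; composing with R -> R/(b) gives pi
  (elements of R/(b) are represented by elements of R).\<close>
definition ext_proj :: "(nat set \<Rightarrow> 'r) \<Rightarrow> 'r" where
  "ext_proj \<omega> = \<omega> {}"

definition ext_homog :: "nat \<Rightarrow> (nat set \<Rightarrow> 'r::zero) \<Rightarrow> bool" where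
  "ext_homog k \<omega> \<longleftrightarrow> (\<forall>I. card I \<noteq> k \<longrightarrow> \<omega> I = 0)"

definition slin_ext :: "('s \<Rightarrow> 'r::comm_ring_1) \<Rightarrow> nat \<Rightarrow> ((nat set \<Rightarrow> 'r) \<Rightarrow> nat set \<Rightarrow> 'r) \<Rightarrow> bool" where
  "slin_ext \<phi> n f \<longleftrightarrow> (\<forall>\<omega>\<in>ext_carrier n. f \<omega> \<in> ext_carrier n) \<and>
     (\<forall>\<omega>\<in>ext_carrier n. \<forall>\<omega>'\<in>ext_carrier n. f (\<omega> + \<omega>') = f \<omega> + f \<omega>') \<and>
     (\<forall>s. \<forall>\<omega>\<in>ext_carrier n. f (\<lambda>I. \<phi> s * \<omega> I) = (\<lambda>I. \<phi> s * f \<omega> I))"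

text \<open>Map of cohomological degree -1 on the exterior algebra: wedge^k F -> wedge^(k+1) F.\<close>
definition ext_deg_minus_one :: "nat \<Rightarrow> ((nat set \<Rightarrow> 'r::zero) \<Rightarrow> nat set \<Rightarrow> 'r) \<Rightarrow> bool" where
  "ext_deg_minus_one n f \<longleftrightarrow> (\<forall>k. \<forall>\<omega>\<in>ext_carrier n. ext_homog k \<omega> \<longrightarrow> ext_homog (Suc k) (f \<omega>))"

text \<open>sigma : R/(b) -> (wedge F, delta_plus) is an S-linear morphism of complexes
  (R/(b) concentrated in degree 0 with zero differential); sigma is given on representatives.\<close>
definition koszul_section ::
  "('s \<Rightarrow> 'r::comm_ring_1) \<Rightarrow> nat \<Rightarrow> (nat \<Rightarrow> 'r) \<Rightarrow> ('r \<Rightarrow> nat set \<Rightarrow> 'r) \<Rightarrow> bool" where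
  "koszul_section \<phi> n b \<sigma> \<longleftrightarrow>
     (\<forall>x y. x - y \<in> seq_ideal b n \<longrightarrow> \<sigma> x = \<sigma> y) \<and>
     (\<forall>x y. \<sigma> (x + y) = \<sigma> x + \<sigma> y) \<and>
     (\<forall>s x. \<sigma> (\<phi> s * x) = (\<lambda>I. \<phi> s * \<sigma> x I)) \<and>
     (\<forall>x. \<sigma> x \<in> ext_carrier n \<and> ext_homog 0 (\<sigma> x) \<and> delta_plus n b (\<sigma> x) = 0)"

text \<open>A finite-rank matrix factorisation X of V over R, given by a finite homogeneous basis B
  (par e = True means e is odd) and the matrix D of d_X (d_X e = sum_f D f e * f).\<close>
definition matrix_factorisation :: "'x set \<Rightarrow> ('x \<Rightarrow> bool) \<Rightarrow> ('x \<Rightarrow> 'x \<Rightarrow> 'r::comm_ring_1) \<Rightarrow> 'r \<Rightarrow> bool" where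
  "matrix_factorisation B par D V \<longleftrightarrow> finite B \<and>
     (\<forall>e\<in>B. \<forall>f\<in>B. par e = par f \<longrightarrow> D f e = 0) \<and>
     (\<forall>e\<in>B. \<forall>f\<in>B. (\<Sum>g\<in>B. D f g * D g e) = (if f = e then V else 0))"

text \<open>L = X (x) wedge F: z e I is the coefficient of e (x) theta_I.\<close>
definition L_carrier :: "'x set \<Rightarrow> nat \<Rightarrow> ('x \<Rightarrow> nat set \<Rightarrow> 'r::zero) set" where
  "L_carrier B n = {z. \<forall>e I. (e \<notin> B \<or> \<not> I \<subseteq> {..<n}) \<longrightarrow> z e I = 0}"

text \<open>M = X (x) R/(b): y e is a representative in R of the coefficient of e; two elements
  are equal when all coefficients agree modulo Q = (b).\<close>
definition M_carrier :: "'x set \<Rightarrow> ('x \<Rightarrow> 'r::zero) set" where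
  "M_carrier B = {y. \<forall>e. e \<notin> B \<longrightarrow> y e = 0}"

definition M_eq :: "'r::comm_ring_1 set \<Rightarrow> 'x set \<Rightarrow> ('x \<Rightarrow> 'r) \<Rightarrow> ('x \<Rightarrow> 'r) \<Rightarrow> bool" where
  "M_eq Q B y y' \<longleftrightarrow> (\<forall>e\<in>B. y e - y' e \<in> Q)"

text \<open>Z/2-parity (True = odd) of homogeneous elements.\<close>
definition L_homog :: "'x set \<Rightarrow> ('x \<Rightarrow> bool) \<Rightarrow> bool \<Rightarrow> ('x \<Rightarrow> nat set \<Rightarrow> 'r::zero) \<Rightarrow> bool" where
  "L_homog B par p z \<longleftrightarrow> (\<forall>e I. ((par e \<noteq> odd (card I)) \<noteq> p) \<longrightarrow> z e I = 0)"

definition M_homog :: "'x set \<Rightarrow> ('x \<Rightarrow> bool) \<Rightarrow> bool \<Rightarrow> ('x \<Rightarrow> 'r::zero) \<Rightarrow> bool" where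
  "M_homog B par p y \<longleftrightarrow> (\<forall>e. par e \<noteq> p \<longrightarrow> y e = 0)"

definition ksign :: "('x \<Rightarrow> bool) \<Rightarrow> 'x \<Rightarrow> 'r::comm_ring_1" where
  "ksign par e = (if par e then -1 else 1)"

text \<open>1 (x) f for an odd map f on wedge F, with Koszul sign: e (x) w |-> (-1)^|e| e (x) f w.\<close>
definition odd_ext :: "'x set \<Rightarrow> ('x \<Rightarrow> bool) \<Rightarrow> ((nat set \<Rightarrow> 'r::comm_ring_1) \<Rightarrow> nat set \<Rightarrow> 'r)
    \<Rightarrow> ('x \<Rightarrow> nat set \<Rightarrow> 'r) \<Rightarrow> 'x \<Rightarrow> nat set \<Rightarrow> 'r" where
  "odd_ext B par f z = (\<lambda>e I. if e \<in> B then ksign par e * f (z e) I else 0)"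

definition dX_L :: "'x set \<Rightarrow> ('x \<Rightarrow> 'x \<Rightarrow> 'r::comm_ring_1) \<Rightarrow> ('x \<Rightarrow> nat set \<Rightarrow> 'r) \<Rightarrow> 'x \<Rightarrow> nat set \<Rightarrow> 'r" where
  "dX_L B D z = (\<lambda>f I. if f \<in> B then (\<Sum>e\<in>B. D f e * z e I) else 0)"

definition dX_M :: "'x set \<Rightarrow> ('x \<Rightarrow> 'x \<Rightarrow> 'r::comm_ring_1) \<Rightarrow> ('x \<Rightarrow> 'r) \<Rightarrow> 'x \<Rightarrow> 'r" where
  "dX_M B D y = (\<lambda>f. if f \<in> B then (\<Sum>e\<in>B. D f e * y e) else 0)"

definition mu_map :: "'x set \<Rightarrow> ('x \<Rightarrow> bool) \<Rightarrow> ('x \<Rightarrow> 'x \<Rightarrow> 'r::comm_ring_1) \<Rightarrow> nat \<Rightarrow> (nat \<Rightarrow> 'r)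
    \<Rightarrow> ('x \<Rightarrow> nat set \<Rightarrow> 'r) \<Rightarrow> 'x \<Rightarrow> nat set \<Rightarrow> 'r" where
  "mu_map B par D n a z = dX_L B D z + odd_ext B par (delta_minus n a) z"

definition d_L :: "'x set \<Rightarrow> ('x \<Rightarrow> bool) \<Rightarrow> ('x \<Rightarrow> 'x \<Rightarrow> 'r::comm_ring_1) \<Rightarrow> nat \<Rightarrow> (nat \<Rightarrow> 'r) \<Rightarrow> (nat \<Rightarrow> 'r)
    \<Rightarrow> ('x \<Rightarrow> nat set \<Rightarrow> 'r) \<Rightarrow> 'x \<Rightarrow> nat set \<Rightarrow> 'r" where
  "d_L B par D n a b z = odd_ext B par (delta_plus n b) z + mu_map B par D n a z"

definition p_map :: "('x \<Rightarrow> nat set \<Rightarrow> 'r) \<Rightarrow> 'x \<Rightarrow> 'r" where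
  "p_map z = (\<lambda>e. ext_proj (z e))"

text \<open>1 (x) sigma : M -> L (sigma is even, so no sign).\<close>
definition sigma_X :: "'x set \<Rightarrow> ('r \<Rightarrow> nat set \<Rightarrow> 'r::zero) \<Rightarrow> ('x \<Rightarrow> 'r) \<Rightarrow> 'x \<Rightarrow> nat set \<Rightarrow> 'r" where
  "sigma_X B \<sigma> y = (\<lambda>e. if e \<in> B then \<sigma> (y e) else (\<lambda>I. 0))"

text \<open>sigma_infinity = sum_{m>=0} (-1)^m (h mu)^m sigma. Since h raises the exterior degree by one
  and mu does not lower it, (h mu)^m sigma = 0 for m > n, so the sum is the finite sum over m <= n.\<close>
definition sigma_inf :: "'x set \<Rightarrow> ('x \<Rightarrow> bool) \<Rightarrow> ('x \<Rightarrow> 'x \<Rightarrow> 'r::comm_ring_1) \<Rightarrow> nat \<Rightarrow> (nat \<Rightarrow> 'r)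
    \<Rightarrow> ((nat set \<Rightarrow> 'r) \<Rightarrow> nat set \<Rightarrow> 'r) \<Rightarrow> ('r \<Rightarrow> nat set \<Rightarrow> 'r) \<Rightarrow> ('x \<Rightarrow> 'r) \<Rightarrow> 'x \<Rightarrow> nat set \<Rightarrow> 'r" where
  "sigma_inf B par D n a h \<sigma> y =
     (\<Sum>m\<le>n. (\<lambda>e I. (-1) ^ m * ((odd_ext B par h \<circ> mu_map B par D n a) ^^ m) (sigma_X B \<sigma> y) e I))"

definition slin_LL :: "('s \<Rightarrow> 'r::comm_ring_1) \<Rightarrow> 'x set \<Rightarrow> nat
    \<Rightarrow> (('x \<Rightarrow> nat set \<Rightarrow> 'r) \<Rightarrow> 'x \<Rightarrow> nat set \<Rightarrow> 'r) \<Rightarrow> bool" where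
  "slin_LL \<phi> B n f \<longleftrightarrow> (\<forall>z\<in>L_carrier B n. f z \<in> L_carrier B n) \<and>
     (\<forall>z\<in>L_carrier B n. \<forall>w\<in>L_carrier B n. f (z + w) = f z + f w) \<and>
     (\<forall>s. \<forall>z\<in>L_carrier B n. f (\<lambda>e I. \<phi> s * z e I) = (\<lambda>e I. \<phi> s * f z e I))"

definition slin_MM :: "('s \<Rightarrow> 'r::comm_ring_1) \<Rightarrow> 'r set \<Rightarrow> 'x set
    \<Rightarrow> (('x \<Rightarrow> 'r) \<Rightarrow> 'x \<Rightarrow> 'r) \<Rightarrow> bool" where
  "slin_MM \<phi> Q B f \<longleftrightarrow> (\<forall>y\<in>M_carrier B. f y \<in> M_carrier B) \<and>
     (\<forall>y\<in>M_carrier B. \<forall>y'\<in>M_carrier B. M_eq Q B y y' \<longrightarrow> M_eq Q B (f y) (f y')) \<and>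
     (\<forall>y\<in>M_carrier B. \<forall>y'\<in>M_carrier B. M_eq Q B (f (y + y')) (f y + f y')) \<and>
     (\<forall>s. \<forall>y\<in>M_carrier B. M_eq Q B (f (\<lambda>e. \<phi> s * y e)) (\<lambda>e. \<phi> s * f y e))"

definition slin_ML :: "('s \<Rightarrow> 'r::comm_ring_1) \<Rightarrow> 'r set \<Rightarrow> 'x set \<Rightarrow> nat
    \<Rightarrow> (('x \<Rightarrow> 'r) \<Rightarrow> 'x \<Rightarrow> nat set \<Rightarrow> 'r) \<Rightarrow> bool" where
  "slin_ML \<phi> Q B n f \<longleftrightarrow> (\<forall>y\<in>M_carrier B. f y \<in> L_carrier B n) \<and>
     (\<forall>y\<in>M_carrier B. \<forall>y'\<in>M_carrier B. M_eq Q B y y' \<longrightarrow> f y = f y') \<and>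
     (\<forall>y\<in>M_carrier B. \<forall>y'\<in>M_carrier B. f (y + y') = f y + f y') \<and>
     (\<forall>s. \<forall>y\<in>M_carrier B. f (\<lambda>e. \<phi> s * y e) = (\<lambda>e I. \<phi> s * f y e I))"

definition slin_LM :: "('s \<Rightarrow> 'r::comm_ring_1) \<Rightarrow> 'r set \<Rightarrow> 'x set \<Rightarrow> nat
    \<Rightarrow> (('x \<Rightarrow> nat set \<Rightarrow> 'r) \<Rightarrow> 'x \<Rightarrow> 'r) \<Rightarrow> bool" where
  "slin_LM \<phi> Q B n f \<longleftrightarrow> (\<forall>z\<in>L_carrier B n. f z \<in> M_carrier B) \<and>
     (\<forall>z\<in>L_carrier B n. \<forall>w\<in>L_carrier B n. M_eq Q B (f (z + w)) (f z + f w)) \<and>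
     (\<forall>s. \<forall>z\<in>L_carrier B n. M_eq Q B (f (\<lambda>e I. \<phi> s * z e I)) (\<lambda>e. \<phi> s * f z e))"

definition retract_datum :: "('s \<Rightarrow> 'r::comm_ring_1) \<Rightarrow> 'r set \<Rightarrow> 'x set \<Rightarrow> ('x \<Rightarrow> bool) \<Rightarrow> nat \<Rightarrow> 'r
    \<Rightarrow> (('x \<Rightarrow> nat set \<Rightarrow> 'r) \<Rightarrow> 'x \<Rightarrow> nat set \<Rightarrow> 'r) \<Rightarrow> (('x \<Rightarrow> 'r) \<Rightarrow> 'x \<Rightarrow> 'r)
    \<Rightarrow> (('x \<Rightarrow> 'r) \<Rightarrow> 'x \<Rightarrow> nat set \<Rightarrow> 'r) \<Rightarrow> (('x \<Rightarrow> nat set \<Rightarrow> 'r) \<Rightarrow> 'x \<Rightarrow> 'r)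
    \<Rightarrow> (('x \<Rightarrow> nat set \<Rightarrow> 'r) \<Rightarrow> 'x \<Rightarrow> nat set \<Rightarrow> 'r) \<Rightarrow> bool" where
  "retract_datum \<phi> Q B par n U dL dM \<iota> p hh \<longleftrightarrow>
     \<comment> \<open>(L, dL) is a linear factorisation of U over S\<close>
     slin_LL \<phi> B n dL \<and>
     (\<forall>q. \<forall>z\<in>L_carrier B n. L_homog B par q z \<longrightarrow> L_homog B par (\<not> q) (dL z)) \<and>
     (\<forall>z\<in>L_carrier B n. dL (dL z) = (\<lambda>e I. U * z e I)) \<and>
     \<comment> \<open>(M, dM) is a linear factorisation of U over S\<close>
     slin_MM \<phi> Q B dM \<and>
     (\<forall>q. \<forall>y\<in>M_carrier B. M_homog B par q y \<longrightarrow> M_homog B par (\<not> q) (dM y)) \<and>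
     (\<forall>y\<in>M_carrier B. M_eq Q B (dM (dM y)) (\<lambda>e. U * y e)) \<and>
     \<comment> \<open>iota is a morphism of linear factorisations\<close>
     slin_ML \<phi> Q B n \<iota> \<and>
     (\<forall>q. \<forall>y\<in>M_carrier B. M_homog B par q y \<longrightarrow> L_homog B par q (\<iota> y)) \<and>
     (\<forall>y\<in>M_carrier B. dL (\<iota> y) = \<iota> (dM y)) \<and>
     \<comment> \<open>p is a morphism of linear factorisations\<close>
     slin_LM \<phi> Q B n p \<and>
     (\<forall>q. \<forall>z\<in>L_carrier B n. L_homog B par q z \<longrightarrow> M_homog B par q (p z)) \<and>
     (\<forall>z\<in>L_carrier B n. M_eq Q B (p (dL z)) (dM (p z))) \<and>
     \<comment> \<open>p iota = 1\<close>
     (\<forall>y\<in>M_carrier B. M_eq Q B (p (\<iota> y)) y) \<and>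
     \<comment> \<open>the homotopy\<close>
     slin_LL \<phi> B n hh \<and>
     (\<forall>q. \<forall>z\<in>L_carrier B n. L_homog B par q z \<longrightarrow> L_homog B par (\<not> q) (hh z)) \<and>
     (\<forall>z\<in>L_carrier B n. dL (hh z) + hh (dL z) = z - \<iota> (p z))"

end

theory Submission
  imports Defs
begin

definition sg :: "nat \<Rightarrow> 'a::ab_group_add \<Rightarrow> 'a" where
  "sg m x = (if even m then x else - x)"

locale pert =
  fixes Lc :: "'l::ab_group_add set" and Mc :: "'m::ab_group_add set"
   and d0 mu h Us :: "'l \<Rightarrow> 'l" and sX :: "'m \<Rightarrow> 'l" and p :: "'l \<Rightarrow> 'm" and n :: nat
  assumes Lc0: "0 \<in> Lc" and Lc_add: "x\<in>Lc \<Longrightarrow> y\<in>Lc \<Longrightarrow> x+y \<in> Lc" and Lc_neg: "x\<in>Lc \<Longrightarrow> -x\<in>Lc"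
  and Mc0: "0 \<in> Mc" and Mc_add: "u\<in>Mc \<Longrightarrow> v\<in>Mc \<Longrightarrow> u+v \<in> Mc"
  and d0_Lc: "x\<in>Lc \<Longrightarrow> d0 x \<in> Lc" and d0_add: "x\<in>Lc \<Longrightarrow> y\<in>Lc \<Longrightarrow> d0(x+y) = d0 x + d0 y"
  and mu_Lc: "x\<in>Lc \<Longrightarrow> mu x \<in> Lc" and mu_add: "x\<in>Lc \<Longrightarrow> y\<in>Lc \<Longrightarrow> mu(x+y) = mu x + mu y"
  and h_Lc: "x\<in>Lc \<Longrightarrow> h x \<in> Lc" and h_add: "x\<in>Lc \<Longrightarrow> y\<in>Lc \<Longrightarrow> h(x+y) = h x + h y"
  and Us_Lc: "x\<in>Lc \<Longrightarrow> Us x \<in> Lc" and Us_add: "x\<in>Lc \<Longrightarrow> y\<in>Lc \<Longrightarrow> Us(x+y) = Us x + Us y"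
  and sX_Lc: "u\<in>Mc \<Longrightarrow> sX u \<in> Lc" and sX_add: "u\<in>Mc \<Longrightarrow> v\<in>Mc \<Longrightarrow> sX(u+v) = sX u + sX v"
  and p_Mc: "x\<in>Lc \<Longrightarrow> p x \<in> Mc" and p_add: "x\<in>Lc \<Longrightarrow> y\<in>Lc \<Longrightarrow> p(x+y) = p x + p y"
  and d0d0: "x\<in>Lc \<Longrightarrow> d0(d0 x) = 0"
  and d0sX: "u\<in>Mc \<Longrightarrow> d0(sX u) = 0"
  and htpy: "x\<in>Lc \<Longrightarrow> d0(h x) + h(d0 x) = x - sX(p x)"
  and hh: "x\<in>Lc \<Longrightarrow> h(h x) = 0" and hsX: "u\<in>Mc \<Longrightarrow> h(sX u) = 0"
  and ph: "x\<in>Lc \<Longrightarrow> p(h x) = 0" and pmuh: "x\<in>Lc \<Longrightarrow> p(mu(h x)) = 0"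
  and curv: "x\<in>Lc \<Longrightarrow> d0(d0 x) + d0(mu x) + mu(d0 x) + mu(mu x) = Us x"
  and hUs: "x\<in>Lc \<Longrightarrow> h(Us x) = Us(h x)"
  and nil: "x\<in>Lc \<Longrightarrow> ((\<lambda>z. h(mu z))^^Suc n) x = 0"
begin

definition A where "A x = h (mu x)"
definition T where "T x = (\<Sum>m\<le>n. sg m ((A^^m) x))"

lemma addhom_0: assumes "\<And>x y. x\<in>Lc \<Longrightarrow> y\<in>Lc \<Longrightarrow> f(x+y) = f x + (f y::'a::ab_group_add)"
  shows "f 0 = 0"
  using assms[OF Lc0 Lc0] by simp

lemma addhom_neg: assumes "\<And>x y. x\<in>Lc \<Longrightarrow> y\<in>Lc \<Longrightarrow> f(x+y) = f x + (f y::'a::ab_group_add)"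
  and "x \<in> Lc" shows "f (-x) = - f x"
proof -
  have "f (x + -x) = f x + f(-x)" using assms Lc_neg by blast
  then show ?thesis using addhom_0[OF assms(1)] by (simp add: eq_neg_iff_add_eq_0 add.commute)
qed

lemma addhom_diff: assumes "\<And>x y. x\<in>Lc \<Longrightarrow> y\<in>Lc \<Longrightarrow> f(x+y) = f x + (f y::'a::ab_group_add)"
  and "x \<in> Lc" "y\<in>Lc" shows "f (x - y) = f x - f y"
  using assms(1)[OF assms(2) Lc_neg[OF assms(3)]] addhom_neg[OF assms(1) assms(3)] by simp

lemma Lc_diff: "x\<in>Lc \<Longrightarrow> y\<in>Lc \<Longrightarrow> x - y \<in> Lc"
  using Lc_add Lc_neg by (metis diff_conv_add_uminus)

lemma A_Lc: "x\<in>Lc \<Longrightarrow> A x \<in> Lc" by (simp add: A_def h_Lc mu_Lc)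
lemma A_add: "x\<in>Lc \<Longrightarrow> y\<in>Lc \<Longrightarrow> A(x+y) = A x + A y"
  by (simp add: A_def mu_add h_add mu_Lc)

lemma Am_Lc: "x\<in>Lc \<Longrightarrow> (A^^m) x \<in> Lc" by (induction m) (auto simp: A_Lc)
lemma Am_add: "x\<in>Lc \<Longrightarrow> y\<in>Lc \<Longrightarrow> (A^^m)(x+y) = (A^^m) x + (A^^m) y"
  by (induction m) (auto simp: A_add Am_Lc)
lemma sg_Lc: "x\<in>Lc \<Longrightarrow> sg m x \<in> Lc" by (simp add: sg_def Lc_neg)
lemma sum_Lc: "finite S \<Longrightarrow> (\<And>i. i\<in>S \<Longrightarrow> f i \<in> Lc) \<Longrightarrow> sum f S \<in> Lc"
  by (induction S rule: finite_induct) (auto simp: Lc0 Lc_add)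
lemma T_Lc: "x\<in>Lc \<Longrightarrow> T x \<in> Lc" unfolding T_def by (auto intro!: sum_Lc sg_Lc Am_Lc)

lemma hom_sum: assumes "\<And>x y. x\<in>Lc \<Longrightarrow> y\<in>Lc \<Longrightarrow> f(x+y) = f x + (f y::'a::ab_group_add)"
  shows "finite S \<Longrightarrow> (\<And>i. i\<in>S \<Longrightarrow> g i \<in> Lc) \<Longrightarrow> f (sum g S) = (\<Sum>i\<in>S. f (g i))"
proof (induction S rule: finite_induct)
  case empty then show ?case using addhom_0[OF assms] by simp
next
  case (insert x F) then show ?case by (simp add: assms sum_Lc)
qed

lemma hom_sg: assumes "\<And>x y. x\<in>Lc \<Longrightarrow> y\<in>Lc \<Longrightarrow> f(x+y) = f x + (f y::'a::ab_group_add)"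
  and "x\<in>Lc" shows "f (sg m x) = sg m (f x)"
  using addhom_neg[OF assms] by (simp add: sg_def)

lemma A_add': "\<And>x y. x\<in>Lc \<Longrightarrow> y\<in>Lc \<Longrightarrow> A(x+y) = A x + A y" using A_add by blast

lemma Anil: "x\<in>Lc \<Longrightarrow> (A^^Suc n) x = 0"
proof -
  have "A = (\<lambda>z. h(mu z))" by (simp add: A_def fun_eq_iff)
  then show "x\<in>Lc \<Longrightarrow> (A^^Suc n) x = 0" using nil by simp
qed

lemma T_eq: assumes c: "c\<in>Lc" shows "T c + A (T c) = c"
proof -
  have "A (T c) = (\<Sum>m\<le>n. sg m ((A^^Suc m) c))"
    unfolding T_def
    by (subst hom_sum[OF A_add']) (auto simp: c sg_Lc Am_Lc hom_sg[OF A_add'] A_Lc)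
  then have "T c + A (T c) = (\<Sum>m\<le>n. sg m ((A^^m) c) - sg (Suc m) ((A^^Suc m) c))"
    unfolding T_def by (simp add: sum.distrib[symmetric] del: funpow.simps) (rule sum.cong, auto simp: sg_def)
  also have "\<dots> = sg 0 ((A^^0) c) - sg (Suc n) ((A^^Suc n) c)"
    by (rule sum_telescope)
  finally show ?thesis using Anil[OF c] by (simp add: sg_def)
qed

lemma inj_1A: assumes x: "x\<in>Lc" and y: "y\<in>Lc" and e: "x + A x = y + A y" shows "x = y"
proof -
  define z where "z = x - y"
  have z: "z \<in> Lc" using z_def Lc_diff x y by simp
  have "z + A z = 0" using e by (simp add: z_def addhom_diff[OF A_add'] x y algebra_simps)
  then have zA: "z = - A z" by (simp add: eq_neg_iff_add_eq_0)
  have "\<forall>m. z = sg m ((A^^m) z)"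
  proof
    fix m show "z = sg m ((A^^m) z)"
    proof (induction m)
      case 0 then show ?case by (simp add: sg_def)
    next
      case (Suc m)
      have "(A^^m) z = sg m z" using Suc by (auto simp: sg_def split: if_splits) (metis minus_minus)
      then have "(A^^Suc m) z = A (sg m z)" by simp
      also have "\<dots> = sg m (A z)" using hom_sg[OF A_add' z] .
      also have "\<dots> = sg m (- z)" using zA by (metis minus_minus)
      finally show ?case by (simp add: sg_def)
    qed
  qed
  then have "z = 0" using Anil[OF z] by (metis sg_def neg_equal_0_iff_equal)
  then show ?thesis by (simp add: z_def)
qed


lemma T_eq': "c\<in>Lc \<Longrightarrow> T c = c - A (T c)" using T_eq by (metis add_diff_cancel)

lemma P1: assumes u: "u\<in>Mc"
  shows "d0 (T (sX u)) + mu (T (sX u)) = T (sX (p (mu (sX u))))"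
proof -
  define c where "c = sX u"
  have c: "c \<in> Lc" using c_def sX_Lc u by simp
  define s where "s = T c"
  have s: "s \<in> Lc" using s_def T_Lc c by simp
  have sA: "s = c - A s" using T_eq'[OF c] s_def by simp
  have mus: "mu s \<in> Lc" using mu_Lc s .
  have As: "A s \<in> Lc" using A_Lc s .
  have hs: "h s = 0"
  proof -
    have "h s = h c - h (A s)" using sA addhom_diff[OF h_add c As] by simp
    also have "\<dots> = 0" using hsX[OF u] hh[OF mus] c_def A_def by simp
    finally show ?thesis .
  qed
  have d0s: "d0 s = - d0 (h (mu s))"
    using sA addhom_diff[OF d0_add c As] d0sX[OF u] c_def A_def by simp
  have pms: "p (mu s) = p (mu c)"
    using sA addhom_diff[OF mu_add c As] addhom_diff[OF p_add mu_Lc[OF c] mu_Lc[OF As]] pmuh[OF mus] A_def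
    by simp
  have dms: "d0 (mu s) = Us s - mu (d0 s + mu s)"
    using curv[OF s] d0d0[OF s] mu_add[OF d0_Lc[OF s] mus] by (simp add: algebra_simps)
  have hdms: "h (d0 (mu s)) = - A (d0 s + mu s)"
    using dms addhom_diff[OF h_add Us_Lc[OF s] mu_Lc[OF Lc_add[OF d0_Lc[OF s] mus]]] hUs[OF s] hs
      addhom_0[OF Us_add] A_def by simp
  have ds: "d0 s + mu s + A (d0 s + mu s) = sX (p (mu c))"
    using d0s htpy[OF mus] pms hdms by (simp add: algebra_simps)
  have c': "sX (p (mu c)) \<in> Lc" using sX_Lc p_Mc mu_Lc c by simp
  show ?thesis
    using inj_1A[OF Lc_add[OF d0_Lc[OF s] mus] T_Lc[OF c']] ds T_eq[OF c'] s_def c_def by simp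
qed

lemma P2: assumes x: "x\<in>Lc"
  shows "(d0 (T (h x)) + mu (T (h x))) + T (h (d0 x + mu x)) = x - T (sX (p x))"
proof -
  define c where "c = h x"
  have c: "c \<in> Lc" using c_def h_Lc x by simp
  define s where "s = T c"
  have s: "s \<in> Lc" using s_def T_Lc c by simp
  have sA: "s = c - A s" using T_eq'[OF c] s_def by simp
  have mus: "mu s \<in> Lc" using mu_Lc s .
  have As: "A s \<in> Lc" using A_Lc s .
  have hs: "h s = 0"
  proof -
    have "h s = h c - h (A s)" using sA addhom_diff[OF h_add c As] by simp
    also have "\<dots> = 0" using hh[OF x] hh[OF mus] c_def A_def by simp
    finally show ?thesis .
  qed
  have d0s: "d0 s = d0 c - d0 (h (mu s))"
    using sA addhom_diff[OF d0_add c As] A_def by simp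
  have pms: "p (mu s) = 0"
    using sA addhom_diff[OF mu_add c As] addhom_diff[OF p_add mu_Lc[OF c] mu_Lc[OF As]] pmuh[OF mus] 
      pmuh[OF x] A_def c_def
    by simp
  have dms: "d0 (mu s) = Us s - mu (d0 s + mu s)"
    using curv[OF s] d0d0[OF s] mu_add[OF d0_Lc[OF s] mus] by (simp add: algebra_simps)
  have hdms: "h (d0 (mu s)) = - A (d0 s + mu s)"
    using dms addhom_diff[OF h_add Us_Lc[OF s] mu_Lc[OF Lc_add[OF d0_Lc[OF s] mus]]] hUs[OF s] hs
      addhom_0[OF Us_add] A_def by simp
  have sX0: "sX 0 = 0" using sX_add[OF Mc0 Mc0] by simp
  have ds: "d0 s + mu s + A (d0 s + mu s) = d0 c"
    using d0s htpy[OF mus] pms hdms sX0 by (simp add: algebra_simps)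
  define g where "g = T (h (d0 x + mu x))"
  have hd: "h (d0 x + mu x) \<in> Lc" using h_Lc Lc_add d0_Lc mu_Lc x by simp
  have g: "g \<in> Lc" using g_def T_Lc hd by simp
  have gA: "g + A g = h (d0 x) + A x" using T_eq[OF hd] g_def h_add[OF d0_Lc[OF x] mu_Lc[OF x]] A_def by simp
  have px: "sX (p x) \<in> Lc" using sX_Lc p_Mc x by simp
  define r where "r = x - T (sX (p x))"
  have r: "r \<in> Lc" using r_def Lc_diff x T_Lc px by simp
  have rA: "r + A r = (x - sX (p x)) + A x"
  proof -
    have aux: "(xx - tt) + bb = (xx - sx) + ax" if "aa + bb = ax" "tt + aa = sx" for xx tt aa bb ax sx :: 'l
    proof -
      have "(xx - tt) + bb = xx - (tt + aa) + (aa + bb)" by (simp add: algebra_simps)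
      then show ?thesis using that by simp
    qed
    have e1: "A (T (sX (p x))) + A (x - T (sX (p x))) = A x"
      using addhom_diff[OF A_add' x T_Lc[OF px]] by simp
    show ?thesis unfolding r_def by (rule aux[OF e1 T_eq[OF px]])
  qed
  have dsg: "d0 s + mu s + g \<in> Lc" using Lc_add d0_Lc s mus g by simp
  have "(d0 s + mu s + g) + A (d0 s + mu s + g) = r + A r"
  proof -
    have ab4: "(X + AX) + (G + AG) = Y" if "X + AX = P" "G + AG = Q + R" "P + Q = Z" "Y = Z + R"
      for X AX G AG P Q R Z Y :: 'l
    proof -
      have "(X + AX) + (G + AG) = (P + Q) + R" using that by (simp add: algebra_simps)
      then show ?thesis using that by simp
    qed
    have "(d0 s + mu s + A (d0 s + mu s)) + (g + A g) = r + A r"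
      by (rule ab4[OF ds gA _ rA]) (use htpy[OF x] c_def in simp)
    then show ?thesis using A_add[OF Lc_add[OF d0_Lc[OF s] mus] g] by (simp add: algebra_simps)
  qed
  then have "d0 s + mu s + g = r" using inj_1A[OF dsg r] by simp
  then show ?thesis using s_def c_def g_def r_def by simp
qed

lemma P3: assumes c: "c\<in>Lc" shows "p (T c) = p c"
  using T_eq'[OF c] addhom_diff[OF p_add c A_Lc[OF T_Lc[OF c]]] ph[OF mu_Lc[OF T_Lc[OF c]]] A_def by simp


lemma T_add: assumes x: "x\<in>Lc" and y: "y\<in>Lc" shows "T (x + y) = T x + T y"
  unfolding T_def by (simp add: Am_add[OF x y] sum.distrib[symmetric]) (rule sum.cong, auto simp: sg_def)

lemma T_comm:
  assumes Sc_L: "\<And>x. x\<in>Lc \<Longrightarrow> Sc x \<in> Lc" and Sc_add: "\<And>x y. x\<in>Lc \<Longrightarrow> y\<in>Lc \<Longrightarrow> Sc (x+y) = Sc x + Sc y"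
    and Sc_A: "\<And>x. x\<in>Lc \<Longrightarrow> A (Sc x) = Sc (A x)" and x: "x\<in>Lc"
  shows "T (Sc x) = Sc (T x)"
proof -
  have Am: "(A^^m) (Sc x) = Sc ((A^^m) x)" for m
    by (induction m) (simp_all add: Sc_A Am_Lc x)
  have "Sc (T x) = (\<Sum>m\<le>n. Sc (sg m ((A^^m) x)))"
    unfolding T_def by (rule hom_sum[OF Sc_add]) (auto intro: sg_Lc Am_Lc x)
  also have "\<dots> = (\<Sum>m\<le>n. sg m ((A^^m) (Sc x)))"
    by (rule sum.cong[OF refl]) (simp add: Am hom_sg[OF Sc_add Am_Lc[OF x]])
  finally show ?thesis by (simp add: T_def)
qed

lemma T_pres:
  assumes P0: "Pr 0" and Padd: "\<And>x y. Pr x \<Longrightarrow> Pr y \<Longrightarrow> Pr (x + y)" and Pneg: "\<And>x. Pr x \<Longrightarrow> Pr (- x)"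
    and PA: "\<And>x. x\<in>Lc \<Longrightarrow> Pr x \<Longrightarrow> Pr (A x)" and x: "x\<in>Lc" and Px: "Pr x"
  shows "Pr (T x)"
proof -
  have Am: "Pr ((A^^m) x)" for m
    by (induction m) (simp_all add: Px PA Am_Lc x)
  have sgP: "Pr (sg m y)" if "Pr y" for m y using that Pneg by (simp add: sg_def)
  have "Pr (\<Sum>m\<in>K. sg m ((A^^m) x))" if "finite K" for K
    using that by (induction K rule: finite_induct) (simp_all add: P0 Padd sgP Am)
  then show ?thesis by (simp add: T_def)
qed

end

lemma sI_0: "0 \<in> seq_ideal b k" unfolding seq_ideal_def mem_Collect_eq by (rule exI[where x="\<lambda>_. 0"]) simp
lemma sI_add: "x \<in> seq_ideal b k \<Longrightarrow> y \<in> seq_ideal b k \<Longrightarrow> x + y \<in> seq_ideal b k"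
proof -
  assume "x \<in> seq_ideal b k" "y \<in> seq_ideal b k"
  then obtain c c' where "x = (\<Sum>i<k. c i * b i)" "y = (\<Sum>i<k. c' i * b i)" unfolding seq_ideal_def by auto
  then have "x + y = (\<Sum>i<k. (c i + c' i) * b i)" by (simp add: sum.distrib distrib_right)
  then show ?thesis unfolding seq_ideal_def mem_Collect_eq by - (rule exI[where x="\<lambda>i. c i + c' i"], assumption)
qed
lemma sI_mult: "x \<in> seq_ideal b k \<Longrightarrow> r * x \<in> seq_ideal b k"
proof -
  assume "x \<in> seq_ideal b k"
  then obtain c where "x = (\<Sum>i<k. c i * b i)" unfolding seq_ideal_def by auto
  then have "r * x = (\<Sum>i<k. (r * c i) * b i)" by (simp add: sum_distrib_left mult.assoc)
  then show ?thesis unfolding seq_ideal_def mem_Collect_eq by - (rule exI[where x="\<lambda>i. r * c i"], assumption)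
qed
lemma sI_neg: "x \<in> seq_ideal b k \<Longrightarrow> - x \<in> seq_ideal b k"
  using sI_mult[of x b k "-1"] by simp
lemma sI_diff: "x \<in> seq_ideal b k \<Longrightarrow> y \<in> seq_ideal b k \<Longrightarrow> x - y \<in> seq_ideal b k"
  unfolding diff_conv_add_uminus by (intro sI_add sI_neg)
lemma sI_sum: "finite S \<Longrightarrow> (\<And>i. i\<in>S \<Longrightarrow> f i \<in> seq_ideal b k) \<Longrightarrow> sum f S \<in> seq_ideal b k"
  by (induction S rule: finite_induct) (auto simp: sI_0 sI_add)
lemma sI_lin: "(\<Sum>i<k. c i * b i) \<in> seq_ideal b k" unfolding seq_ideal_def mem_Collect_eq by (rule exI[where x=c]) (rule refl)
lemma sI_b: assumes "i < k" shows "b i \<in> seq_ideal b k"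
proof -
  have "(\<Sum>j<k. (if j = i then 1 else 0) * b j) = b i" using assms
    by (simp add: if_distrib[of "\<lambda>x. x * _"] sum.delta cong: if_cong)
  then show ?thesis unfolding seq_ideal_def mem_Collect_eq by - (rule exI[where x="\<lambda>j. if j = i then 1 else 0"], rule sym)
qed
lemma sI_gen: "finite S \<Longrightarrow> S \<subseteq> {..<k} \<Longrightarrow> (\<Sum>i\<in>S. b i * c i) \<in> seq_ideal b k"
proof (rule sI_sum)
  fix i assume "finite S" "S \<subseteq> {..<k}" "i \<in> S"
  then have "c i * b i \<in> seq_ideal b k" by (intro sI_mult sI_b) auto
  then show "b i * c i \<in> seq_ideal b k" by (simp add: mult.commute)
qed

lemma ext_sign_insert: "k \<notin> Y \<Longrightarrow> (ext_sign i (insert k Y) :: 'r::comm_ring_1) =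
   (if k < i then - 1 else 1) * ext_sign i Y"
proof -
  assume k: "k \<notin> Y"
  have fin: "finite {j\<in>Y. j < i}" by (rule finite_subset[of _ "{..<i}"]) auto
  show ?thesis
  proof (cases "k < i")
    case True
    then have "{j\<in>insert k Y. j < i} = insert k {j\<in>Y. j < i}" by auto
    then show ?thesis using True k fin by (simp add: ext_sign_def)
  next
    case False
    then have "{j\<in>insert k Y. j < i} = {j\<in>Y. j < i}" by auto
    then show ?thesis using False by (simp add: ext_sign_def)
  qed
qed

lemma ext_sign_sq: "(ext_sign i Y :: 'r::comm_ring_1) * ext_sign i Y = 1"
  unfolding ext_sign_def by (metis power_mult_distrib mult_minus1 minus_minus power_one)

lemma ksign_sq: "(ksign par e :: 'r::comm_ring_1) * ksign par e = 1"
  by (simp add: ksign_def)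

lemma antisym_sum:
  fixes F :: "nat \<Rightarrow> nat \<Rightarrow> 'r::ab_group_add"
  assumes fin: "finite C" and anti: "\<And>i k. i\<in>C \<Longrightarrow> k\<in>C \<Longrightarrow> i \<noteq> k \<Longrightarrow> F k i = - F i k"
  shows "(\<Sum>i\<in>C. \<Sum>k\<in>C-{i}. F i k) = 0"
proof -
  have split: "(\<Sum>k\<in>C-{i}. F i k) = (\<Sum>k\<in>{k\<in>C. i < k}. F i k) + (\<Sum>k\<in>{k\<in>C. k < i}. F i k)" for i
  proof -
    have "C - {i} = {k\<in>C. i < k} \<union> {k\<in>C. k < i}" by auto
    moreover have "{k\<in>C. i < k} \<inter> {k\<in>C. k < i} = {}" by auto
    ultimately show ?thesis using fin by (simp add: sum.union_disjoint)
  qed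
  have "(\<Sum>i\<in>C. \<Sum>k\<in>{k\<in>C. k < i}. F i k) = (\<Sum>k\<in>C. \<Sum>i\<in>{i\<in>C. k < i}. F i k)"
    by (rule sum.swap_restrict[OF fin fin])
  also have "\<dots> = (\<Sum>k\<in>C. \<Sum>i\<in>{i\<in>C. k < i}. - F k i)"
  proof (intro sum.cong refl)
    fix k i assume "k \<in> C" "i \<in> {i\<in>C. k < i}"
    then show "F i k = - F k i" using anti[of k i] by simp
  qed
  also have "\<dots> = - (\<Sum>i\<in>C. \<Sum>k\<in>{k\<in>C. i < k}. F i k)" by (simp add: sum_negf)
  finally have neg: "(\<Sum>i\<in>C. \<Sum>k\<in>{k\<in>C. k < i}. F i k) = - (\<Sum>i\<in>C. \<Sum>k\<in>{k\<in>C. i < k}. F i k)" .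
  have "(\<Sum>i\<in>C. \<Sum>k\<in>C-{i}. F i k) = (\<Sum>i\<in>C. \<Sum>k\<in>{k\<in>C. i < k}. F i k) + (\<Sum>i\<in>C. \<Sum>k\<in>{k\<in>C. k < i}. F i k)"
    by (simp only: split sum.distrib)
  also have "\<dots> = 0" unfolding neg by (rule right_minus)
  finally show ?thesis .
qed

lemma dp_add: "delta_plus n b (\<omega> + \<omega>') = delta_plus n b \<omega> + delta_plus n b \<omega>'"
  by (rule ext) (simp add: delta_plus_def sum.distrib algebra_simps)
lemma dm_add: "delta_minus n a (\<omega> + \<omega>') = delta_minus n a \<omega> + delta_minus n a \<omega>'"
  by (rule ext) (simp add: delta_minus_def sum.distrib algebra_simps)
lemma dp_scal: "delta_plus n b (\<lambda>I. c * \<omega> I) = (\<lambda>J. c * delta_plus n b \<omega> J)"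
  by (rule ext) (simp add: delta_plus_def sum_distrib_left algebra_simps)
lemma dm_scal: "delta_minus n a (\<lambda>I. c * \<omega> I) = (\<lambda>J. c * delta_minus n a \<omega> J)"
  by (rule ext) (simp add: delta_minus_def sum_distrib_left algebra_simps)
lemma dp_sum: "delta_plus n b (\<lambda>I. \<Sum>f\<in>F. g f I) = (\<lambda>J. \<Sum>f\<in>F. delta_plus n b (g f) J)"
  by (rule ext) (simp add: delta_plus_def sum_distrib_left algebra_simps sum.swap[of _ F])
lemma dm_sum: "delta_minus n a (\<lambda>I. \<Sum>f\<in>F. g f I) = (\<lambda>J. \<Sum>f\<in>F. delta_minus n a (g f) J)"
  by (rule ext) (simp add: delta_minus_def sum_distrib_left algebra_simps sum.swap[of _ F])

lemma dp_carrier: "delta_plus n b \<omega> \<in> ext_carrier n"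
  by (simp add: delta_plus_def ext_carrier_def)
lemma dm_carrier: "delta_minus n a \<omega> \<in> ext_carrier n"
  by (simp add: delta_minus_def ext_carrier_def)

lemma sgn_swap: "(i::nat) \<noteq> k \<Longrightarrow> ((if k < i then - 1 else 1) :: 'r::comm_ring_1) * (if i < k then - 1 else 1) = - 1"
  by auto

lemma dpdp: "delta_plus n b (delta_plus n b \<omega>) = 0"
proof (rule ext)
  fix J :: "nat set"
  show "delta_plus n b (delta_plus n b \<omega>) J = 0 J"
  proof (cases "J \<subseteq> {..<n}")
    case False then show ?thesis by (simp add: delta_plus_def)
  next
    case True
    define C where "C = {..<n} - J"
    define F where "F i k = b i * ext_sign i J * (b k * ext_sign k (insert i J) * \<omega> (insert k (insert i J)))" for i k
    have "delta_plus n b (delta_plus n b \<omega>) J = (\<Sum>i\<in>C. \<Sum>k\<in>C-{i}. F i k)"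
    proof -
      have "delta_plus n b (delta_plus n b \<omega>) J = (\<Sum>i\<in>C. b i * ext_sign i J * delta_plus n b \<omega> (insert i J))"
        using True by (simp add: delta_plus_def[of n b "delta_plus n b \<omega>"] C_def)
      also have "\<dots> = (\<Sum>i\<in>C. \<Sum>k\<in>C-{i}. F i k)"
      proof (rule sum.cong[OF refl])
        fix i assume i: "i \<in> C"
        then have "insert i J \<subseteq> {..<n}" "{..<n} - insert i J = C - {i}" using True by (auto simp: C_def)
        then show "b i * ext_sign i J * delta_plus n b \<omega> (insert i J) = (\<Sum>k\<in>C-{i}. F i k)"
          by (simp add: delta_plus_def F_def sum_distrib_left)
      qed
      finally show ?thesis .
    qed
    also have "\<dots> = 0"
    proof (rule antisym_sum)
      show "finite C" by (simp add: C_def)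
      fix i k assume "i \<in> C" "k \<in> C" "i \<noteq> k"
      then have ik: "i \<notin> J" "k \<notin> J" "i \<noteq> k" by (auto simp: C_def)
      have e: "(ext_sign k (insert i J) :: 'a) = (if i < k then - 1 else 1) * ext_sign k J"
              "(ext_sign i (insert k J) :: 'a) = (if k < i then - 1 else 1) * ext_sign i J"
        using ik by (simp_all add: ext_sign_insert)
      show "F k i = - F i k"
      proof (cases "i < k")
        case True then show ?thesis unfolding F_def e using ik by (simp add: insert_commute algebra_simps)
      next
        case False then have "k < i" using ik by simp
        then show ?thesis unfolding F_def e using ik by (simp add: insert_commute algebra_simps)
      qed
    qed
    finally show ?thesis by simp
  qed
qed


lemma dmdm: "delta_minus n a (delta_minus n a \<omega>) = 0"
proof (rule ext)
  fix J :: "nat set"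
  show "delta_minus n a (delta_minus n a \<omega>) J = 0 J"
  proof (cases "J \<subseteq> {..<n}")
    case False then show ?thesis by (simp add: delta_minus_def)
  next
    case True
    have finJ: "finite J" using True finite_subset by blast
    define F where "F i k = a i * ext_sign i (J - {i}) * (a k * ext_sign k (J - {i} - {k}) * \<omega> (J - {i} - {k}))" for i k
    have "delta_minus n a (delta_minus n a \<omega>) J = (\<Sum>i\<in>J. \<Sum>k\<in>J-{i}. F i k)"
    proof -
      have "delta_minus n a (delta_minus n a \<omega>) J = (\<Sum>i\<in>J. a i * ext_sign i (J - {i}) * delta_minus n a \<omega> (J - {i}))"
        using True by (simp add: delta_minus_def[of n a "delta_minus n a \<omega>"])
      also have "\<dots> = (\<Sum>i\<in>J. \<Sum>k\<in>J-{i}. F i k)"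
      proof (rule sum.cong[OF refl])
        fix i assume i: "i \<in> J"
        then have "J - {i} \<subseteq> {..<n}" using True by auto
        then show "a i * ext_sign i (J - {i}) * delta_minus n a \<omega> (J - {i}) = (\<Sum>k\<in>J-{i}. F i k)"
          by (simp add: delta_minus_def F_def sum_distrib_left)
      qed
      finally show ?thesis .
    qed
    also have "\<dots> = 0"
    proof (rule antisym_sum[OF finJ])
      fix i k assume ik: "i \<in> J" "k \<in> J" "i \<noteq> k"
      define Y where "Y = J - {i} - {k}"
      have Y: "J - {i} = insert k Y" "J - {k} = insert i Y" "J - {k} - {i} = Y" "i \<notin> Y" "k \<notin> Y" "Y - {i} = Y" "Y - {k} = Y"
        using ik by (auto simp: Y_def)
      have e: "(ext_sign k (insert i Y) :: 'a) = (if i < k then - 1 else 1) * ext_sign k Y"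
              "(ext_sign i (insert k Y) :: 'a) = (if k < i then - 1 else 1) * ext_sign i Y"
        using Y by (simp_all add: ext_sign_insert)
      show "F k i = - F i k"
      proof (cases "i < k")
        case True then show ?thesis unfolding F_def Y(1,2) Y_def[symmetric] Y(3) e using ik Y(6,7) by (simp add: algebra_simps)
      next
        case False then have "k < i" using ik by simp
        then show ?thesis unfolding F_def Y(1,2) Y_def[symmetric] Y(3) e using ik Y(6,7) by (simp add: algebra_simps)
      qed
    qed
    finally show ?thesis by simp
  qed
qed


lemma dpdm: assumes om: "\<omega> \<in> ext_carrier n"
  shows "delta_plus n b (delta_minus n a \<omega>) J + delta_minus n a (delta_plus n b \<omega>) J = (\<Sum>i<n. a i * b i) * \<omega> J"
proof (cases "J \<subseteq> {..<n}")
  case False then show ?thesis using om by (simp add: delta_plus_def delta_minus_def ext_carrier_def)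
next
  case True
  have finJ: "finite J" using True finite_subset by blast
  define C where "C = {..<n} - J"
  have finC: "finite C" by (simp add: C_def)
  define G1 where "G1 i k = b i * ext_sign i J * (a k * ext_sign k (insert i (J - {k})) * \<omega> (insert i (J - {k})))" for i k
  define G2 where "G2 k i = a k * ext_sign k (J - {k}) * (b i * ext_sign i (J - {k}) * \<omega> (insert i (J - {k})))" for k i
  have L1: "delta_plus n b (delta_minus n a \<omega>) J = (\<Sum>i\<in>C. a i * b i * \<omega> J) + (\<Sum>i\<in>C. \<Sum>k\<in>J. G1 i k)"
  proof -
    have "delta_plus n b (delta_minus n a \<omega>) J = (\<Sum>i\<in>C. b i * ext_sign i J * delta_minus n a \<omega> (insert i J))"
      using True by (simp add: delta_plus_def C_def)
    also have "\<dots> = (\<Sum>i\<in>C. a i * b i * \<omega> J + (\<Sum>k\<in>J. G1 i k))"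
    proof (rule sum.cong[OF refl])
      fix i assume i: "i \<in> C"
      then have iJ: "insert i J \<subseteq> {..<n}" "i \<notin> J" using True by (auto simp: C_def)
      have r: "insert i J - {k} = insert i (J - {k})" if "k \<in> J" for k using that iJ by auto
      have "delta_minus n a \<omega> (insert i J) = a i * ext_sign i J * \<omega> J +
              (\<Sum>k\<in>J. a k * ext_sign k (insert i (J - {k})) * \<omega> (insert i (J - {k})))"
        using iJ finJ by (simp add: delta_minus_def r cong: sum.cong)
      then show "b i * ext_sign i J * delta_minus n a \<omega> (insert i J) = a i * b i * \<omega> J + (\<Sum>k\<in>J. G1 i k)"
        by (simp add: G1_def sum_distrib_left algebra_simps ext_sign_sq[unfolded mult.assoc])
    qed
    finally show ?thesis by (simp add: sum.distrib)
  qed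
  have L2: "delta_minus n a (delta_plus n b \<omega>) J = (\<Sum>k\<in>J. a k * b k * \<omega> J) + (\<Sum>k\<in>J. \<Sum>i\<in>C. G2 k i)"
  proof -
    have "delta_minus n a (delta_plus n b \<omega>) J = (\<Sum>k\<in>J. a k * ext_sign k (J - {k}) * delta_plus n b \<omega> (J - {k}))"
      using True by (simp add: delta_minus_def)
    also have "\<dots> = (\<Sum>k\<in>J. a k * b k * \<omega> J + (\<Sum>i\<in>C. G2 k i))"
    proof (rule sum.cong[OF refl])
      fix k assume k: "k \<in> J"
      then have kJ: "J - {k} \<subseteq> {..<n}" "{..<n} - (J - {k}) = insert k C" "k \<notin> C" "insert k (J - {k}) = J"
        using True by (auto simp: C_def)
      have "delta_plus n b \<omega> (J - {k}) = b k * ext_sign k (J - {k}) * \<omega> J +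
              (\<Sum>i\<in>C. b i * ext_sign i (J - {k}) * \<omega> (insert i (J - {k})))"
        using kJ finC by (simp add: delta_plus_def)
      then show "a k * ext_sign k (J - {k}) * delta_plus n b \<omega> (J - {k}) = a k * b k * \<omega> J + (\<Sum>i\<in>C. G2 k i)"
        by (simp add: G2_def sum_distrib_left algebra_simps ext_sign_sq[unfolded mult.assoc])
    qed
    finally show ?thesis by (simp add: sum.distrib)
  qed
  have cross: "(\<Sum>i\<in>C. \<Sum>k\<in>J. G1 i k) + (\<Sum>k\<in>J. \<Sum>i\<in>C. G2 k i) = 0"
  proof -
    have "(\<Sum>k\<in>J. \<Sum>i\<in>C. G2 k i) = (\<Sum>i\<in>C. \<Sum>k\<in>J. G2 k i)" by (rule sum.swap)
    moreover have "(\<Sum>i\<in>C. \<Sum>k\<in>J. G1 i k + G2 k i) = 0"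
    proof (intro sum.neutral ballI)
      fix i k assume i: "i \<in> C" and k: "k \<in> J"
      then have ik: "i \<noteq> k" "i \<notin> J - {k}" "k \<notin> J - {k}" "insert k (J - {k}) = J" by (auto simp: C_def)
      have e: "(ext_sign k (insert i (J - {k})) :: 'a) = (if i < k then - 1 else 1) * ext_sign k (J - {k})"
              "(ext_sign i J :: 'a) = (if k < i then - 1 else 1) * ext_sign i (J - {k})"
        using ik ext_sign_insert[of i "J - {k}" k] ext_sign_insert[of k "J - {k}" i] by auto
      show "G1 i k + G2 k i = 0"
      proof (cases "i < k")
        case True then show ?thesis unfolding G1_def G2_def e using ik by (simp add: algebra_simps)
      next
        case False then have "k < i" using ik by simp
        then show ?thesis unfolding G1_def G2_def e using ik by (simp add: algebra_simps)
      qed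
    qed
    ultimately show ?thesis by (simp add: sum.distrib)
  qed
  have diag: "(\<Sum>i\<in>C. a i * b i * \<omega> J) + (\<Sum>k\<in>J. a k * b k * \<omega> J) = (\<Sum>i<n. a i * b i) * \<omega> J"
  proof -
    have "{..<n} = C \<union> J" "C \<inter> J = {}" using True by (auto simp: C_def)
    then have "(\<Sum>i<n. a i * b i * \<omega> J) = (\<Sum>i\<in>C. a i * b i * \<omega> J) + (\<Sum>k\<in>J. a k * b k * \<omega> J)"
      using finC finJ by (simp add: sum.union_disjoint)
    then show ?thesis by (simp add: sum_distrib_right)
  qed
  show ?thesis using L1 L2 cross diag by (simp add: algebra_simps)
qed

lemma L_carrierD: "z \<in> L_carrier B n \<Longrightarrow> e \<notin> B \<Longrightarrow> z e = 0"
  by (auto simp: L_carrier_def)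
lemma L_carrier_ext: "z \<in> L_carrier B n \<Longrightarrow> z e \<in> ext_carrier n"
  by (auto simp: L_carrier_def ext_carrier_def)
lemma L_carrierI: "(\<And>e. e \<notin> B \<Longrightarrow> z e = 0) \<Longrightarrow> (\<And>e. z e \<in> ext_carrier n) \<Longrightarrow> z \<in> L_carrier B n"
  by (auto simp: L_carrier_def ext_carrier_def fun_eq_iff)

lemma L0: "(0::'x\<Rightarrow>nat set\<Rightarrow>'r::comm_ring_1) \<in> L_carrier B n" by (simp add: L_carrier_def)
lemma L_add: "(z::'x\<Rightarrow>nat set\<Rightarrow>'r::comm_ring_1) \<in> L_carrier B n \<Longrightarrow> w \<in> L_carrier B n \<Longrightarrow> z + w \<in> L_carrier B n"
  by (simp add: L_carrier_def)
lemma L_neg: "(z::'x\<Rightarrow>nat set\<Rightarrow>'r::comm_ring_1) \<in> L_carrier B n \<Longrightarrow> - z \<in> L_carrier B n"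
  by (simp add: L_carrier_def)
lemma L_scal: "(z::'x\<Rightarrow>nat set\<Rightarrow>'r::comm_ring_1) \<in> L_carrier B n \<Longrightarrow> (\<lambda>e I. c * z e I) \<in> L_carrier B n"
  by (simp add: L_carrier_def)
lemma M0: "(0::'x\<Rightarrow>'r::comm_ring_1) \<in> M_carrier B" by (simp add: M_carrier_def)
lemma M_add: "(y::'x\<Rightarrow>'r::comm_ring_1) \<in> M_carrier B \<Longrightarrow> y' \<in> M_carrier B \<Longrightarrow> y + y' \<in> M_carrier B"
  by (simp add: M_carrier_def)
lemma ext0: "(0::nat set\<Rightarrow>'r::comm_ring_1) \<in> ext_carrier n" by (simp add: ext_carrier_def)
lemma ext_add: "(\<omega>::nat set\<Rightarrow>'r::comm_ring_1) \<in> ext_carrier n \<Longrightarrow> \<omega>' \<in> ext_carrier n \<Longrightarrow> \<omega> + \<omega>' \<in> ext_carrier n"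
  by (simp add: ext_carrier_def)
lemma ext_neg: "(\<omega>::nat set\<Rightarrow>'r::comm_ring_1) \<in> ext_carrier n \<Longrightarrow> - \<omega> \<in> ext_carrier n"
  by (simp add: ext_carrier_def)
lemma ext_scal: "(\<omega>::nat set\<Rightarrow>'r::comm_ring_1) \<in> ext_carrier n \<Longrightarrow> (\<lambda>I. c * \<omega> I) \<in> ext_carrier n"
  by (simp add: ext_carrier_def)

lemma odd_ext_app: "e \<in> B \<Longrightarrow> odd_ext B par f z e = (\<lambda>I. ksign par e * f (z e) I)"
  by (simp add: odd_ext_def)
lemma odd_ext_app': "e \<notin> B \<Longrightarrow> odd_ext B par f z e = 0"
  by (simp add: odd_ext_def fun_eq_iff)

lemma odd_ext_L: "(\<And>\<omega>. \<omega> \<in> ext_carrier n \<Longrightarrow> f \<omega> \<in> ext_carrier n) \<Longrightarrow> z \<in> L_carrier B n \<Longrightarrow>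
   odd_ext B par f z \<in> L_carrier B n"
proof (rule L_carrierI)
  fix e assume f: "\<And>\<omega>. \<omega> \<in> ext_carrier n \<Longrightarrow> f \<omega> \<in> ext_carrier n" and z: "z \<in> L_carrier B n"
  show "odd_ext B par f z e \<in> ext_carrier n"
    using f[OF L_carrier_ext[OF z]] by (cases "e \<in> B") (simp_all add: odd_ext_app odd_ext_app' ext0 ext_scal)
qed (simp add: odd_ext_app')

lemma odd_ext_add: "(\<And>\<omega> \<omega>'. \<omega> \<in> ext_carrier n \<Longrightarrow> \<omega>' \<in> ext_carrier n \<Longrightarrow> f (\<omega> + \<omega>') = f \<omega> + f \<omega>') \<Longrightarrow>
   z \<in> L_carrier B n \<Longrightarrow> w \<in> L_carrier B n \<Longrightarrow>
   odd_ext B par f (z + w) = odd_ext B par f z + odd_ext B par f w"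
  by (rule ext)+ (simp add: odd_ext_def L_carrier_ext algebra_simps)

lemma dX_L_L: "dX_L B D z \<in> L_carrier B n" if "z \<in> L_carrier B n"
  using that by (simp add: L_carrier_def dX_L_def)
lemma dX_L_add: "dX_L B D (z + w) = dX_L B D z + dX_L B D w"
  by (rule ext)+ (simp add: dX_L_def sum.distrib algebra_simps)
lemma dX_M_M: "dX_M B D y \<in> M_carrier B"
  by (simp add: M_carrier_def dX_M_def)
lemma dX_M_add: "dX_M B D (y + y') = dX_M B D y + dX_M B D y'"
  by (rule ext)+ (simp add: dX_M_def sum.distrib algebra_simps)

lemma mu_L: "z \<in> L_carrier B n \<Longrightarrow> mu_map B par D n a z \<in> L_carrier B n"
  unfolding mu_map_def by (intro L_add dX_L_L odd_ext_L dm_carrier)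
lemma mu_add: "z \<in> L_carrier B n \<Longrightarrow> w \<in> L_carrier B n \<Longrightarrow>
   mu_map B par D n a (z + w) = mu_map B par D n a z + mu_map B par D n a w"
proof -
  assume zw: "z \<in> L_carrier B n" "w \<in> L_carrier B n"
  have "odd_ext B par (delta_minus n a) (z+w) = odd_ext B par (delta_minus n a) z + odd_ext B par (delta_minus n a) w"
    by (rule odd_ext_add[OF dm_add zw])
  then show ?thesis by (simp only: mu_map_def dX_L_add) (simp only: add_ac)
qed
lemma d0_L: "z \<in> L_carrier B n \<Longrightarrow> odd_ext B par (delta_plus n b) z \<in> L_carrier B n"
  by (intro odd_ext_L dp_carrier)
lemma d0_add: "z \<in> L_carrier B n \<Longrightarrow> w \<in> L_carrier B n \<Longrightarrow>
   odd_ext B par (delta_plus n b) (z + w) = odd_ext B par (delta_plus n b) z + odd_ext B par (delta_plus n b) w"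
  by (rule odd_ext_add[OF dp_add])
lemma dL_L: "z \<in> L_carrier B n \<Longrightarrow> d_L B par D n a b z \<in> L_carrier B n"
  unfolding d_L_def by (intro L_add d0_L mu_L)
lemma dL_add: "z \<in> L_carrier B n \<Longrightarrow> w \<in> L_carrier B n \<Longrightarrow>
   d_L B par D n a b (z + w) = d_L B par D n a b z + d_L B par D n a b w"
  by (simp only: d_L_def d0_add mu_add) (simp only: add_ac)

lemma sigmaX_L: "koszul_section \<phi> n b \<sigma> \<Longrightarrow> sigma_X B \<sigma> y \<in> L_carrier B n"
  by (rule L_carrierI) (auto simp: sigma_X_def koszul_section_def ext_carrier_def)
lemma sigmaX_add: "koszul_section \<phi> n b \<sigma> \<Longrightarrow> sigma_X B \<sigma> (y + y') = sigma_X B \<sigma> y + sigma_X B \<sigma> y'"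
  by (rule ext) (simp add: sigma_X_def koszul_section_def fun_eq_iff)
lemma p_M: "z \<in> L_carrier B n \<Longrightarrow> p_map z \<in> M_carrier B"
  by (simp add: p_map_def M_carrier_def ext_proj_def L_carrier_def)
lemma p_add: "p_map (z + w) = p_map z + p_map w"
  by (simp add: p_map_def ext_proj_def fun_eq_iff)

definition filt :: "nat \<Rightarrow> ('x \<Rightarrow> nat set \<Rightarrow> 'r::zero) \<Rightarrow> bool" where
  "filt k z \<longleftrightarrow> (\<forall>e I. card I < k \<longrightarrow> z e I = 0)"

lemma sum_app: "(sum f K) x = (\<Sum>j\<in>K. f j x)"
  by (induction K rule: infinite_finite_induct) auto

lemma ext_sum: "(\<And>j. j \<in> K \<Longrightarrow> f j \<in> ext_carrier n) \<Longrightarrow> sum f K \<in> ext_carrier n"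
  by (simp add: ext_carrier_def sum_app)

context
  fixes \<phi> :: "'s::comm_ring_1 \<Rightarrow> 'r::comm_ring_1" and n :: nat and h :: "(nat set \<Rightarrow> 'r) \<Rightarrow> nat set \<Rightarrow> 'r"
  assumes h_lin: "slin_ext \<phi> n h" and h_deg: "ext_deg_minus_one n h"
begin

lemma h_ext: "\<omega> \<in> ext_carrier n \<Longrightarrow> h \<omega> \<in> ext_carrier n"
  using h_lin by (simp add: slin_ext_def)
lemma h_add: "\<omega> \<in> ext_carrier n \<Longrightarrow> \<omega>' \<in> ext_carrier n \<Longrightarrow> h (\<omega> + \<omega>') = h \<omega> + h \<omega>'"
  using h_lin by (simp add: slin_ext_def)
lemma h_scal: "\<omega> \<in> ext_carrier n \<Longrightarrow> h (\<lambda>I. \<phi> s * \<omega> I) = (\<lambda>I. \<phi> s * h \<omega> I)"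
  using h_lin by (simp add: slin_ext_def)
lemma h0: "h 0 = 0"
  using h_add[OF ext0 ext0] by simp
lemma h_neg: "\<omega> \<in> ext_carrier n \<Longrightarrow> h (- \<omega>) = - h \<omega>"
proof -
  assume w: "\<omega> \<in> ext_carrier n"
  have "h (\<omega> + - \<omega>) = h \<omega> + h (- \<omega>)" by (rule h_add[OF w ext_neg[OF w]])
  then have "h \<omega> + h (- \<omega>) = 0" using h0 by simp
  then show ?thesis by (rule minus_unique[symmetric])
qed
lemma h_ksign: "\<omega> \<in> ext_carrier n \<Longrightarrow> h (\<lambda>I. ksign par e * \<omega> I) = (\<lambda>I. ksign par e * h \<omega> I)"
proof -
  assume w: "\<omega> \<in> ext_carrier n"
  have m: "(\<lambda>I. - \<omega> I) = - \<omega>" by (simp add: fun_eq_iff)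
  show ?thesis using h_neg[OF w] by (simp add: ksign_def m fun_eq_iff)
qed
lemma h_sum: "finite K \<Longrightarrow> (\<And>j. j \<in> K \<Longrightarrow> f j \<in> ext_carrier n) \<Longrightarrow> h (sum f K) = (\<Sum>j\<in>K. h (f j))"
proof (induction K rule: finite_induct)
  case empty then show ?case using h0 by (simp add: zero_fun_def)
next
  case (insert x F)
  have sF: "sum f F \<in> ext_carrier n"
    using insert by (intro ext_sum) auto
  have fx: "f x \<in> ext_carrier n" using insert by simp
  have "h (sum f (insert x F)) = h (f x + sum f F)" by (subst sum.insert[OF insert(1,2)]) (rule refl)
  also have "\<dots> = h (f x) + h (sum f F)" by (rule h_add[OF fx sF])
  also have "\<dots> = h (f x) + (\<Sum>j\<in>F. h (f j))" using insert.IH insert.prems by simp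
  also have "\<dots> = (\<Sum>j\<in>insert x F. h (f j))" by (subst sum.insert[OF insert(1,2)]) (rule refl)
  finally show ?case .
qed

lemma h_deg_gen:
  assumes w: "\<omega> \<in> ext_carrier n" and S: "\<And>I. card I \<notin> S \<Longrightarrow> \<omega> I = 0" and I: "card I \<notin> Suc ` S"
  shows "h \<omega> I = 0"
proof -
  define wj where "wj j = (\<lambda>I. if card I = j then \<omega> I else 0)" for j
  define K where "K = {..n} \<inter> S"
  have wj: "wj j \<in> ext_carrier n" for j using w by (auto simp: wj_def ext_carrier_def)
  have hom: "ext_homog j (wj j)" for j by (simp add: ext_homog_def wj_def)
  have cardn: "\<omega> I = 0" if "card I > n" for I
  proof -
    have "\<not> I \<subseteq> {..<n}"
    proof
      assume "I \<subseteq> {..<n}"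
      then have "card I \<le> card {..<n}" by (intro card_mono) auto
      then show False using that by simp
    qed
    then show ?thesis using w by (simp add: ext_carrier_def)
  qed
  have sum: "\<omega> = sum wj K"
  proof
    fix J
    have "(sum wj K) J = (\<Sum>j\<in>K. if card J = j then \<omega> J else 0)" by (simp add: sum_app wj_def)
    also have "\<dots> = (if card J \<in> K then \<omega> J else 0)" by (simp add: K_def)
    also have "\<dots> = \<omega> J" using S cardn by (auto simp: K_def not_le)
    finally show "\<omega> J = (sum wj K) J" by simp
  qed
  have "h \<omega> = (\<Sum>j\<in>K. h (wj j))" using h_sum[of K wj] wj arg_cong[OF sum, of h] by (simp add: K_def)
  then have "h \<omega> I = (\<Sum>j\<in>K. h (wj j) I)" by (simp add: sum_app)
  also have "\<dots> = 0"
  proof (rule sum.neutral, rule ballI)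
    fix j assume "j \<in> K"
    then have "card I \<noteq> Suc j" using I by (auto simp: K_def)
    moreover have "ext_homog (Suc j) (h (wj j))" using h_deg wj hom by (simp add: ext_deg_minus_one_def)
    ultimately show "h (wj j) I = 0" by (simp add: ext_homog_def)
  qed
  finally show ?thesis .
qed


lemma oh_L: "z \<in> L_carrier B n \<Longrightarrow> odd_ext B par h z \<in> L_carrier B n"
  by (rule odd_ext_L[OF h_ext])
lemma oh_add: "z \<in> L_carrier B n \<Longrightarrow> w \<in> L_carrier B n \<Longrightarrow>
    odd_ext B par h (z + w) = odd_ext B par h z + odd_ext B par h w"
  by (rule odd_ext_add[OF h_add])
lemma oh_scal: "z \<in> L_carrier B n \<Longrightarrow> odd_ext B par h (\<lambda>e I. \<phi> s * z e I) = (\<lambda>e I. \<phi> s * odd_ext B par h z e I)"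
  by (rule ext)+ (simp add: odd_ext_def h_scal[OF L_carrier_ext] algebra_simps)
lemma oh_filt: assumes z: "z \<in> L_carrier B n" and f: "filt k z" shows "filt (Suc k) (odd_ext B par h z)"
  unfolding filt_def
proof (intro allI impI)
  fix e and I :: "nat set" assume I: "card I < Suc k"
  show "odd_ext B par h z e I = 0"
  proof (cases "e \<in> B")
    case True
    have "h (z e) I = 0"
      by (rule h_deg_gen[OF L_carrier_ext[OF z], of "{k..}"]) (use f I in \<open>auto simp: filt_def\<close>)
    then show ?thesis using True by (simp add: odd_ext_def)
  qed (simp add: odd_ext_def)
qed
lemma oh_par: assumes z: "z \<in> L_carrier B n" and q: "L_homog B par q z"
  shows "L_homog B par (\<not> q) (odd_ext B par h z)"
  unfolding L_homog_def
proof (intro allI impI)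
  fix e and I :: "nat set" assume I: "(par e \<noteq> odd (card I)) \<noteq> (\<not> q)"
  show "odd_ext B par h z e I = 0"
  proof (cases "e \<in> B")
    case True
    have "h (z e) I = 0"
    proof (rule h_deg_gen[OF L_carrier_ext[OF z], of "{j. (par e \<noteq> odd j) = q}"])
      show "z e J = 0" if "card J \<notin> {j. (par e \<noteq> odd j) = q}" for J
        using q that by (auto simp: L_homog_def)
      show "card I \<notin> Suc ` {j. (par e \<noteq> odd j) = q}" using I by auto
    qed
    then show ?thesis using True by (simp add: odd_ext_def)
  qed (simp add: odd_ext_def)
qed

end

lemma mu_filt: assumes f: "filt k z" shows "filt k (mu_map B par D n a z)"
  unfolding filt_def
proof (intro allI impI)
  fix e and I :: "nat set" assume I: "card I < k"
  have 1: "dX_L B D z e I = 0" using f I by (simp add: dX_L_def filt_def)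
  have 2: "delta_minus n a (z e) I = 0"
  proof (cases "I \<subseteq> {..<n}")
    case True
    then have "finite I" using finite_subset by blast
    then have c: "card (I - {i}) < k" for i using I by (meson card_Diff1_le le_less_trans)
    have "z e (I - {i}) = 0" for i using f c[of i] by (simp add: filt_def)
    then show ?thesis using True by (simp add: delta_minus_def)
  qed (simp add: delta_minus_def)
  show "mu_map B par D n a z e I = 0" using 1 2 by (simp add: mu_map_def odd_ext_def)
qed

lemma p_filt: "filt 1 z \<Longrightarrow> p_map z = 0"
  by (simp add: filt_def p_map_def ext_proj_def fun_eq_iff)

lemma filt_nil: assumes "z \<in> L_carrier B n" "filt (Suc n) z" shows "z = 0"
proof (rule ext, rule ext)
  fix e and I :: "nat set"
  show "z e I = 0 e I"
  proof (cases "I \<subseteq> {..<n}")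
    case True
    then have "card I \<le> card {..<n}" by (intro card_mono) auto
    then show ?thesis using assms(2) by (simp add: filt_def)
  qed (use assms(1) in \<open>simp add: L_carrier_def\<close>)
qed

lemma filt0: "filt 0 z" by (simp add: filt_def)

lemma op_comb:
  fixes op :: "(nat set \<Rightarrow> 'r::comm_ring_1) \<Rightarrow> nat set \<Rightarrow> 'r"
  assumes add: "\<And>\<omega> \<omega>'. op (\<omega> + \<omega>') = op \<omega> + op \<omega>'"
    and scal: "\<And>c \<omega>. op (\<lambda>I. c * \<omega> I) = (\<lambda>J. c * op \<omega> J)"
    and sm: "\<And>g. op (\<lambda>I. \<Sum>f\<in>B. g f I) = (\<lambda>J. \<Sum>f\<in>B. op (g f) J)"
  shows "op (\<lambda>I. c * (\<alpha> I + \<beta> I) + (\<Sum>g\<in>B. d g * \<gamma> g I)) J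
     = c * (op \<alpha> J + op \<beta> J) + (\<Sum>g\<in>B. d g * op (\<gamma> g) J)"
proof -
  have e: "(\<lambda>I. c * (\<alpha> I + \<beta> I) + (\<Sum>g\<in>B. d g * \<gamma> g I)) =
        (\<lambda>I. c * (\<alpha> + \<beta>) I) + (\<lambda>I. \<Sum>g\<in>B. (\<lambda>I. d g * \<gamma> g I) I)"
    by (simp add: fun_eq_iff)
  show ?thesis unfolding e add scal sm by (simp add: add scal)
qed

lemma dL_app: "e \<in> B \<Longrightarrow> d_L B par D n a b z e =
   (\<lambda>I. ksign par e * (delta_plus n b (z e) I + delta_minus n a (z e) I) + (\<Sum>g\<in>B. D e g * z g I))"
  by (simp add: d_L_def mu_map_def odd_ext_def dX_L_def fun_eq_iff algebra_simps)
lemma dL_app': "e \<notin> B \<Longrightarrow> d_L B par D n a b z e = 0"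
  by (simp add: d_L_def mu_map_def odd_ext_def dX_L_def fun_eq_iff)

lemma dL_sq:
  assumes MF: "matrix_factorisation B par D V" and z: "z \<in> L_carrier B n"
  shows "d_L B par D n a b (d_L B par D n a b z) = (\<lambda>e I. (V + (\<Sum>i<n. a i * b i)) * z e I)"
proof (rule ext, rule ext)
  fix e and I :: "nat set"
  let ?P = "delta_plus n b" and ?M = "delta_minus n a" and ?W = "\<Sum>i<n. a i * b i"
  define w where "w = d_L B par D n a b z"
  define X where "X g = ?P (z g) I + ?M (z g) I" for g
  have fin: "finite B" using MF by (simp add: matrix_factorisation_def)
  show "d_L B par D n a b w e I = (V + ?W) * z e I"
  proof (cases "e \<in> B")
    case False then show ?thesis using z by (simp add: dL_app' L_carrierD)
  next
    case True
    have we: "w e = (\<lambda>I. ksign par e * (?P (z e) I + ?M (z e) I) + (\<Sum>g\<in>B. D e g * z g I))"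
      using True by (simp add: w_def dL_app)
    have Pwe: "?P (w e) I = ksign par e * (?P (?P (z e)) I + ?P (?M (z e)) I) + (\<Sum>g\<in>B. D e g * ?P (z g) I)"
      unfolding we by (rule op_comb[OF dp_add dp_scal dp_sum])
    have Mwe: "?M (w e) I = ksign par e * (?M (?P (z e)) I + ?M (?M (z e)) I) + (\<Sum>g\<in>B. D e g * ?M (z g) I)"
      unfolding we by (rule op_comb[OF dm_add dm_scal dm_sum])
    have diag: "?P (?P (z e)) I + ?P (?M (z e)) I + (?M (?P (z e)) I + ?M (?M (z e)) I) = ?W * z e I"
      using dpdm[OF L_carrier_ext[OF z], where a=a and b=b and J=I] by (simp add: dpdp dmdm)
    have T1: "ksign par e * (?P (w e) I + ?M (w e) I) = ?W * z e I + (\<Sum>g\<in>B. ksign par e * D e g * X g)"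
    proof -
      have "ksign par e * (?P (w e) I + ?M (w e) I) =
          (ksign par e * ksign par e) * (?P (?P (z e)) I + ?P (?M (z e)) I + (?M (?P (z e)) I + ?M (?M (z e)) I))
          + (\<Sum>g\<in>B. ksign par e * D e g * X g)"
        unfolding Pwe Mwe X_def by (simp add: algebra_simps sum.distrib sum_distrib_left)
      then show ?thesis using diag by (simp add: ksign_sq)
    qed
    have T2: "(\<Sum>f\<in>B. D e f * w f I) = (\<Sum>f\<in>B. ksign par f * D e f * X f) + (\<Sum>f\<in>B. \<Sum>g\<in>B. D e f * D f g * z g I)"
    proof -
      have "(\<Sum>f\<in>B. D e f * w f I) = (\<Sum>f\<in>B. ksign par f * D e f * X f + (\<Sum>g\<in>B. D e f * D f g * z g I))"
        by (rule sum.cong[OF refl]) (simp add: w_def dL_app X_def algebra_simps sum_distrib_left)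
      then show ?thesis by (simp add: sum.distrib)
    qed
    have cross: "(\<Sum>g\<in>B. ksign par e * D e g * X g) + (\<Sum>f\<in>B. ksign par f * D e f * X f) = 0"
    proof -
      have "(\<Sum>g\<in>B. ksign par e * D e g * X g) + (\<Sum>f\<in>B. ksign par f * D e f * X f)
           = (\<Sum>g\<in>B. (ksign par e + ksign par g) * D e g * X g)"
        by (simp add: sum.distrib algebra_simps)
      also have "\<dots> = 0"
      proof (rule sum.neutral, rule ballI)
        fix g assume g: "g \<in> B"
        show "(ksign par e + ksign par g) * D e g * X g = 0"
        proof (cases "par e = par g")
          case True then have "D e g = 0" using MF g \<open>e \<in> B\<close> by (simp add: matrix_factorisation_def)
          then show ?thesis by simp
        next
          case False then show ?thesis by (auto simp: ksign_def)
        qed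
      qed
      finally show ?thesis .
    qed
    have dbl: "(\<Sum>f\<in>B. \<Sum>g\<in>B. D e f * D f g * z g I) = V * z e I"
    proof -
      have "(\<Sum>f\<in>B. \<Sum>g\<in>B. D e f * D f g * z g I) = (\<Sum>g\<in>B. (\<Sum>f\<in>B. D e f * D f g) * z g I)"
        by (subst sum.swap) (simp add: sum_distrib_right)
      also have "\<dots> = (\<Sum>g\<in>B. (if e = g then V else 0) * z g I)"
        using MF True by (intro sum.cong refl) (simp add: matrix_factorisation_def)
      also have "\<dots> = V * z e I" using True fin by (simp add: if_distrib[of "\<lambda>x. x * _"] cong: if_cong)
      finally show ?thesis .
    qed
    have "d_L B par D n a b w e I = ksign par e * (?P (w e) I + ?M (w e) I) + (\<Sum>f\<in>B. D e f * w f I)"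
      using True by (simp add: dL_app)
    also have "\<dots> = ?W * z e I + ((\<Sum>g\<in>B. ksign par e * D e g * X g) + (\<Sum>f\<in>B. ksign par f * D e f * X f))
        + (\<Sum>f\<in>B. \<Sum>g\<in>B. D e f * D f g * z g I)"
      unfolding T1 T2 by (simp add: algebra_simps)
    also have "\<dots> = (V + ?W) * z e I" unfolding cross dbl by (simp add: algebra_simps)
    finally show ?thesis .
  qed
qed

lemma oe_oe:
  assumes "\<And>e. e \<in> B \<Longrightarrow> f (\<lambda>I. ksign par e * g (z e) I) = (\<lambda>J. ksign par e * f (g (z e)) J)"
  shows "odd_ext B par f (odd_ext B par g z) = (\<lambda>e I. if e \<in> B then f (g (z e)) I else (0::'r::comm_ring_1))"
proof (rule ext, rule ext)
  fix e and I :: "nat set"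
  show "odd_ext B par f (odd_ext B par g z) e I = (if e \<in> B then f (g (z e)) I else 0)"
  proof (cases "e \<in> B")
    case True
    have "odd_ext B par f (odd_ext B par g z) e I = ksign par e * f (\<lambda>I. ksign par e * g (z e) I) I"
      using True by (simp add: odd_ext_app)
    also have "\<dots> = (ksign par e * ksign par e) * f (g (z e)) I" using assms[OF True] by simp
    finally show ?thesis using True by (simp add: ksign_sq)
  qed (simp add: odd_ext_def)
qed

lemma d0d0: "odd_ext B par (delta_plus n b) (odd_ext B par (delta_plus n b) z) = (0::'x \<Rightarrow> nat set \<Rightarrow> 'r::comm_ring_1)"
  by (subst oe_oe) (auto simp: dp_scal dpdp fun_eq_iff)

lemma sigma0: "koszul_section \<phi> n b \<sigma> \<Longrightarrow> \<sigma> 0 = 0"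
proof -
  assume "koszul_section \<phi> n b \<sigma>"
  then have "\<sigma> (0 + 0) = \<sigma> 0 + \<sigma> 0" unfolding koszul_section_def by blast
  then show ?thesis by simp
qed

lemma sigma_app: "e \<in> B \<Longrightarrow> sigma_X B \<sigma> y e = \<sigma> (y e)" by (simp add: sigma_X_def)
lemma sigma_app': "e \<notin> B \<Longrightarrow> sigma_X B \<sigma> y e = 0" by (simp add: sigma_X_def fun_eq_iff)

lemma d0sX: "koszul_section \<phi> n b \<sigma> \<Longrightarrow> odd_ext B par (delta_plus n b) (sigma_X B \<sigma> y) = 0"
  by (rule ext)+ (simp add: odd_ext_def sigma_X_def koszul_section_def)

context
  fixes \<phi> :: "'s::comm_ring_1 \<Rightarrow> 'r::comm_ring_1" and n :: nat and h :: "(nat set \<Rightarrow> 'r) \<Rightarrow> nat set \<Rightarrow> 'r"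
    and b :: "nat \<Rightarrow> 'r" and \<sigma> :: "'r \<Rightarrow> nat set \<Rightarrow> 'r"
  assumes h_lin: "slin_ext \<phi> n h" and h_deg: "ext_deg_minus_one n h"
    and sigma: "koszul_section \<phi> n b \<sigma>"
    and h_htpy: "\<forall>\<omega>\<in>ext_carrier n.
                   delta_plus n b (h \<omega>) + h (delta_plus n b \<omega>) = \<omega> - \<sigma> (ext_proj \<omega>)"
    and h_sq: "\<forall>\<omega>\<in>ext_carrier n. h (h \<omega>) = 0"
    and h_sigma: "\<forall>x. h (\<sigma> x) = 0"
begin

lemma htpyL: assumes z: "z \<in> L_carrier B n"
  shows "odd_ext B par (delta_plus n b) (odd_ext B par h z) + odd_ext B par h (odd_ext B par (delta_plus n b) z)
    = z - sigma_X B \<sigma> (p_map z)"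
proof -
  have 1: "odd_ext B par (delta_plus n b) (odd_ext B par h z) = (\<lambda>e I. if e \<in> B then delta_plus n b (h (z e)) I else 0)"
    by (rule oe_oe) (simp add: dp_scal)
  have 2: "odd_ext B par h (odd_ext B par (delta_plus n b) z) = (\<lambda>e I. if e \<in> B then h (delta_plus n b (z e)) I else 0)"
    by (rule oe_oe) (simp add: h_ksign[OF h_lin h_deg dp_carrier])
  show ?thesis
  proof (rule ext, rule ext)
    fix e and I :: "nat set"
    show "(odd_ext B par (delta_plus n b) (odd_ext B par h z) + odd_ext B par h (odd_ext B par (delta_plus n b) z)) e I
        = (z - sigma_X B \<sigma> (p_map z)) e I"
    proof (cases "e \<in> B")
      case True
      have "delta_plus n b (h (z e)) + h (delta_plus n b (z e)) = z e - \<sigma> (ext_proj (z e))"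
        using h_htpy L_carrier_ext[OF z] by blast
      from fun_cong[OF this, of I]
      have "delta_plus n b (h (z e)) I + h (delta_plus n b (z e)) I = (z e - \<sigma> (ext_proj (z e))) I" by simp
      then show ?thesis using True by (simp add: 1 2 sigma_app p_map_def)
    next
      case False then show ?thesis using z by (simp add: 1 2 sigma_app' L_carrierD)
    qed
  qed
qed

lemma hhL: "z \<in> L_carrier B n \<Longrightarrow> odd_ext B par h (odd_ext B par h z) = 0"
  by (subst oe_oe) (auto simp: h_ksign[OF h_lin h_deg h_ext[OF h_lin h_deg]] h_sq L_carrier_ext fun_eq_iff)

lemma hsX: "odd_ext B par h (sigma_X B \<sigma> y) = 0"
  by (rule ext)+ (simp add: odd_ext_def sigma_X_def h_sigma)

lemma sigma_rep: "\<sigma> x {} - x \<in> seq_ideal b n"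
proof -
  define \<omega> where "\<omega> = (\<lambda>I::nat set. if I = {} then x else (0::'r))"
  have w: "\<omega> \<in> ext_carrier n" by (simp add: \<omega>_def ext_carrier_def)
  have P0: "delta_plus n b \<omega> = 0" by (rule ext) (simp add: delta_plus_def \<omega>_def)
  have "delta_plus n b (h \<omega>) + h (delta_plus n b \<omega>) = \<omega> - \<sigma> (ext_proj \<omega>)"
    using h_htpy w by blast
  then have "delta_plus n b (h \<omega>) = \<omega> - \<sigma> x"
    unfolding P0 h0[OF h_lin h_deg] by (simp add: ext_proj_def \<omega>_def)
  then have "delta_plus n b (h \<omega>) {} = x - \<sigma> x {}" by (simp add: \<omega>_def)
  moreover have "delta_plus n b (h \<omega>) {} \<in> seq_ideal b n"
    by (simp add: delta_plus_def mult.assoc) (rule sI_gen, auto)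
  ultimately show ?thesis using sI_neg by fastforce
qed

end

lemma dXM_eq: assumes fin: "finite B" and eq: "M_eq (seq_ideal b n) B y y'"
  shows "M_eq (seq_ideal b n) B (dX_M B D y) (dX_M B D y')"
  unfolding M_eq_def
proof
  fix e assume e: "e \<in> B"
  have "dX_M B D y e - dX_M B D y' e = (\<Sum>g\<in>B. D e g * (y g - y' g))"
    using e by (simp add: dX_M_def sum_subtractf algebra_simps)
  also have "\<dots> \<in> seq_ideal b n" using fin eq by (intro sI_sum sI_mult) (auto simp: M_eq_def)
  finally show "dX_M B D y e - dX_M B D y' e \<in> seq_ideal b n" .
qed

lemma dXM_sq: assumes MF: "matrix_factorisation B par D V"
  shows "M_eq (seq_ideal b n) B (dX_M B D (dX_M B D y)) (\<lambda>e. (V + (\<Sum>i<n. a i * b i)) * y e)"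
  unfolding M_eq_def
proof
  fix e assume e: "e \<in> B"
  have fin: "finite B" using MF by (simp add: matrix_factorisation_def)
  have "dX_M B D (dX_M B D y) e = (\<Sum>g\<in>B. D e g * (\<Sum>f\<in>B. D g f * y f))" using e by (simp add: dX_M_def)
  also have "\<dots> = (\<Sum>f\<in>B. (\<Sum>g\<in>B. D e g * D g f) * y f)"
    by (simp add: sum_distrib_left sum_distrib_right mult.assoc) (rule sum.swap)
  also have "\<dots> = (\<Sum>f\<in>B. (if e = f then V else 0) * y f)"
    using MF e by (intro sum.cong refl) (simp add: matrix_factorisation_def)
  also have "\<dots> = V * y e" using e fin by (simp add: if_distrib[of "\<lambda>x. x * _"] cong: if_cong)
  finally have "dX_M B D (dX_M B D y) e - (V + (\<Sum>i<n. a i * b i)) * y e = - ((\<Sum>i<n. a i * b i) * y e)"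
    by (simp add: algebra_simps)
  also have "\<dots> \<in> seq_ideal b n"
    by (intro sI_neg) (simp add: sum_distrib_right mult.assoc mult.commute[of _ "b _"] sI_gen)
  finally show "dX_M B D (dX_M B D y) e - (V + (\<Sum>i<n. a i * b i)) * y e \<in> seq_ideal b n" .
qed

lemma dXM_par: assumes MF: "matrix_factorisation B par D V" and y: "M_homog B par q y"
  shows "M_homog B par (\<not> q) (dX_M B D y)"
  unfolding M_homog_def
proof (intro allI impI)
  fix f assume f: "par f \<noteq> (\<not> q)"
  show "dX_M B D y f = 0"
  proof (cases "f \<in> B")
    case True
    have "D f e * y e = 0" if "e \<in> B" for e
      using MF y that True f by (cases "par e = par f") (auto simp: matrix_factorisation_def M_homog_def)
    then show ?thesis using True by (simp add: dX_M_def)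
  qed (simp add: dX_M_def)
qed

lemma L_homog_add: "L_homog B par q (z::'x\<Rightarrow>nat set\<Rightarrow>'r::comm_ring_1) \<Longrightarrow> L_homog B par q w \<Longrightarrow> L_homog B par q (z + w)"
  by (simp add: L_homog_def)

lemma d0_par: assumes z: "L_homog B par q z"
  shows "L_homog B par (\<not> q) (odd_ext B par (delta_plus n b) z)"
  unfolding L_homog_def
proof (intro allI impI)
  fix e and I :: "nat set" assume c: "(par e \<noteq> odd (card I)) \<noteq> (\<not> q)"
  have "z e (insert i I) = 0" if "I \<subseteq> {..<n}" "i \<in> {..<n} - I" for i
  proof -
    have "finite I" using that finite_subset by blast
    then have "card (insert i I) = Suc (card I)" using that by simp
    then have "(par e \<noteq> odd (card (insert i I))) \<noteq> q" using c by simp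
    then show ?thesis using z unfolding L_homog_def by blast
  qed
  then show "odd_ext B par (delta_plus n b) z e I = 0" by (simp add: odd_ext_def delta_plus_def)
qed

lemma mu_par: assumes MF: "matrix_factorisation B par D V" and z: "L_homog B par q z"
  shows "L_homog B par (\<not> q) (mu_map B par D n a z)"
proof -
  have 1: "L_homog B par (\<not> q) (dX_L B D z)"
    unfolding L_homog_def
  proof (intro allI impI)
    fix e and I :: "nat set" assume c: "(par e \<noteq> odd (card I)) \<noteq> (\<not> q)"
    have "D e g * z g I = 0" if "e \<in> B" "g \<in> B" for g
      using MF z that c by (cases "par e = par g") (auto simp: matrix_factorisation_def L_homog_def)
    then show "dX_L B D z e I = 0" by (simp add: dX_L_def)
  qed
  have 2: "L_homog B par (\<not> q) (odd_ext B par (delta_minus n a) z)"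
    unfolding L_homog_def
  proof (intro allI impI)
    fix e and I :: "nat set" assume c: "(par e \<noteq> odd (card I)) \<noteq> (\<not> q)"
    have "z e (I - {i}) = 0" if "I \<subseteq> {..<n}" "i \<in> I" for i
    proof -
      have "finite I" using that finite_subset by blast
      then have "card I = Suc (card (I - {i}))" using that by (intro card_Suc_Diff1[symmetric])
      then have "(par e \<noteq> odd (card (I - {i}))) \<noteq> q" using c by simp
      then show ?thesis using z unfolding L_homog_def by blast
    qed
    then show "odd_ext B par (delta_minus n a) z e I = 0" by (simp add: odd_ext_def delta_minus_def)
  qed
  show ?thesis unfolding mu_map_def by (rule L_homog_add[OF 1 2])
qed

lemma dL_par: "matrix_factorisation B par D V \<Longrightarrow> L_homog B par q z \<Longrightarrow> L_homog B par (\<not> q) (d_L B par D n a b z)"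
  unfolding d_L_def by (intro L_homog_add d0_par mu_par)

lemma sX_par: assumes sigma: "koszul_section \<phi> n b \<sigma>" and y: "M_homog B par q y"
  shows "L_homog B par q (sigma_X B \<sigma> y)"
  unfolding L_homog_def
proof (intro allI impI)
  fix e and I :: "nat set" assume c: "(par e \<noteq> odd (card I)) \<noteq> q"
  show "sigma_X B \<sigma> y e I = 0"
  proof (cases "card I = 0")
    case True
    then have "y e = 0" using c y by (simp add: M_homog_def)
    then show ?thesis using sigma0[OF sigma] by (simp add: sigma_X_def)
  next
    case False
    then show ?thesis using sigma by (simp add: sigma_X_def koszul_section_def ext_homog_def)
  qed
qed

lemma p_par: "L_homog B par q z \<Longrightarrow> M_homog B par q (p_map z)"
  by (simp add: L_homog_def M_homog_def p_map_def ext_proj_def)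

lemma p_dL: assumes fin: "finite B"
  shows "M_eq (seq_ideal b n) B (p_map (d_L B par D n a b z)) (dX_M B D (p_map z))"
  unfolding M_eq_def
proof
  fix e assume e: "e \<in> B"
  have "p_map (d_L B par D n a b z) e - dX_M B D (p_map z) e = ksign par e * delta_plus n b (z e) {}"
    using e by (simp add: dL_app p_map_def ext_proj_def dX_M_def delta_minus_def)
  also have "\<dots> \<in> seq_ideal b n"
    by (rule sI_mult) (simp add: delta_plus_def mult.assoc sI_gen)
  finally show "p_map (d_L B par D n a b z) e - dX_M B D (p_map z) e \<in> seq_ideal b n" .
qed

lemma sX_eq: assumes sigma: "koszul_section \<phi> n b \<sigma>" and eq: "M_eq (seq_ideal b n) B y y'"
  shows "sigma_X B \<sigma> y = sigma_X B \<sigma> y'"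
  using sigma eq by (auto simp: sigma_X_def koszul_section_def M_eq_def fun_eq_iff)

lemma dL_scal: "d_L B par D n a b (\<lambda>e I. c * z e I) = (\<lambda>e I. c * d_L B par D n a b z e I)"
  by (rule ext)+ (simp add: d_L_def mu_map_def odd_ext_def dX_L_def dp_scal dm_scal sum_distrib_left algebra_simps)
lemma mu_scal: "mu_map B par D n a (\<lambda>e I. c * z e I) = (\<lambda>e I. c * mu_map B par D n a z e I)"
  by (rule ext)+ (simp add: mu_map_def odd_ext_def dX_L_def dm_scal sum_distrib_left algebra_simps)
lemma dXM_scal: "dX_M B D (\<lambda>e. c * y e) = (\<lambda>e. c * dX_M B D y e)"
  by (rule ext) (simp add: dX_M_def sum_distrib_left algebra_simps)
lemma p_scal: "p_map (\<lambda>e I. c * z e I) = (\<lambda>e. c * p_map z e)"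
  by (simp add: p_map_def ext_proj_def)
lemma sX_scal: "koszul_section \<phi> n b \<sigma> \<Longrightarrow> sigma_X B \<sigma> (\<lambda>e. \<phi> s * y e) = (\<lambda>e I. \<phi> s * sigma_X B \<sigma> y e I)"
  by (rule ext) (simp add: sigma_X_def koszul_section_def fun_eq_iff)

lemma M_eq_refl: "M_eq (seq_ideal b n) B y y" by (simp add: M_eq_def sI_0)

lemma pmusX: assumes sigma: "koszul_section \<phi> n b \<sigma>"
  and rep: "\<And>x. \<sigma> x {} - x \<in> seq_ideal b n" and fin: "finite B"
  shows "M_eq (seq_ideal b n) B (p_map (mu_map B par D n a (sigma_X B \<sigma> y))) (dX_M B D y)"
  unfolding M_eq_def
proof
  fix e assume e: "e \<in> B"
  have "p_map (mu_map B par D n a (sigma_X B \<sigma> y)) e - dX_M B D y e = (\<Sum>g\<in>B. D e g * (\<sigma> (y g) {} - y g))"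
    using e by (simp add: p_map_def ext_proj_def mu_map_def dX_L_def odd_ext_def delta_minus_def dX_M_def
       sigma_X_def sum_subtractf algebra_simps cong: sum.cong)
  also have "\<dots> \<in> seq_ideal b n" using fin rep by (intro sI_sum sI_mult) auto
  finally show "p_map (mu_map B par D n a (sigma_X B \<sigma> y)) e - dX_M B D y e \<in> seq_ideal b n" .
qed

theorem propositionD1:
  fixes \<phi> :: "'s::comm_ring_1 \<Rightarrow> 'r::comm_ring_1"
    and n :: nat and a b :: "nat \<Rightarrow> 'r" and W :: 'r
    and \<sigma> :: "'r \<Rightarrow> nat set \<Rightarrow> 'r"
    and h :: "(nat set \<Rightarrow> 'r) \<Rightarrow> nat set \<Rightarrow> 'r"
    and B :: "'x set" and par :: "'x \<Rightarrow> bool" and D :: "'x \<Rightarrow> 'x \<Rightarrow> 'r" and V :: 'r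
  assumes hom: "ring_hom_into \<phi>"
    and noeth: "noetherian_ring TYPE('r)"
    and reg: "regular_seq b n"
    and W_def: "W = (\<Sum>i<n. a i * b i)"
    and sigma: "koszul_section \<phi> n b \<sigma>"
    and h_lin: "slin_ext \<phi> n h"
    and h_deg: "ext_deg_minus_one n h"
    and h_htpy: "\<forall>\<omega>\<in>ext_carrier n.
                   delta_plus n b (h \<omega>) + h (delta_plus n b \<omega>) = \<omega> - \<sigma> (ext_proj \<omega>)"
    and h_sq: "\<forall>\<omega>\<in>ext_carrier n. h (h \<omega>) = 0"
    and h_sigma: "\<forall>x. h (\<sigma> x) = 0"
    and MF: "matrix_factorisation B par D V"
    and VW: "\<exists>s0. \<phi> s0 = V + W"
  shows "\<exists>h_inf. retract_datum \<phi> (seq_ideal b n) B par n (V + W)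
            (d_L B par D n a b) (dX_M B D) (sigma_inf B par D n a h \<sigma>) p_map h_inf"
proof -
  obtain s0 where s0: "\<phi> s0 = V + W" using VW by blast
  have fin: "finite B" using MF by (simp add: matrix_factorisation_def)
  let ?Q = "seq_ideal b n"
  let ?L = "L_carrier B n :: ('x \<Rightarrow> nat set \<Rightarrow> 'r) set" and ?d0 = "odd_ext B par (delta_plus n b)" and ?mu = "mu_map B par D n a"
    and ?oh = "odd_ext B par h" and ?Us = "\<lambda>z e I. (V + W) * z e I"
  have rep: "\<And>x. \<sigma> x {} - x \<in> ?Q" by (rule sigma_rep[OF h_lin h_deg sigma h_htpy h_sq h_sigma])
  have filtAm: "z \<in> ?L \<Longrightarrow> ((\<lambda>z. ?oh (?mu z))^^m) z \<in> ?L \<and> filt m (((\<lambda>z. ?oh (?mu z))^^m) z)" for z m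
  proof (induction m)
    case 0 then show ?case by (simp add: filt0)
  next
    case (Suc m) then show ?case
      by (simp add: oh_L[OF h_lin h_deg] mu_L oh_filt[OF h_lin h_deg] mu_filt)
  qed
  let ?M = "M_carrier B :: ('x \<Rightarrow> 'r) set"
  interpret P: pert ?L ?M ?d0 ?mu ?oh ?Us "sigma_X B \<sigma>" p_map n
  proof
    show "0 \<in> ?L" by (rule L0)
    show "\<And>x y. x \<in> ?L \<Longrightarrow> y \<in> ?L \<Longrightarrow> x + y \<in> ?L" by (rule L_add)
    show "\<And>x. x \<in> ?L \<Longrightarrow> - x \<in> ?L" by (rule L_neg)
    show "0 \<in> ?M" by (rule M0)
    show "\<And>u v. u \<in> ?M \<Longrightarrow> v \<in> ?M \<Longrightarrow> u + v \<in> ?M" by (rule M_add)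
    show "\<And>x. x \<in> ?L \<Longrightarrow> ?d0 x \<in> ?L" by (rule d0_L)
    show "\<And>x y. x \<in> ?L \<Longrightarrow> y \<in> ?L \<Longrightarrow> ?d0 (x + y) = ?d0 x + ?d0 y" by (rule d0_add)
    show "\<And>x. x \<in> ?L \<Longrightarrow> ?mu x \<in> ?L" by (rule mu_L)
    show "\<And>x y. x \<in> ?L \<Longrightarrow> y \<in> ?L \<Longrightarrow> ?mu (x + y) = ?mu x + ?mu y" by (rule mu_add)
    show "\<And>x. x \<in> ?L \<Longrightarrow> ?oh x \<in> ?L" by (rule oh_L[OF h_lin h_deg])
    show "\<And>x y. x \<in> ?L \<Longrightarrow> y \<in> ?L \<Longrightarrow> ?oh (x + y) = ?oh x + ?oh y" by (rule oh_add[OF h_lin h_deg])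
    show "\<And>x. x \<in> ?L \<Longrightarrow> ?Us x \<in> ?L" by (rule L_scal)
    show "\<And>x y. x \<in> ?L \<Longrightarrow> y \<in> ?L \<Longrightarrow> ?Us (x + y) = ?Us x + ?Us y" by (simp add: fun_eq_iff algebra_simps)
    show "\<And>u. u \<in> ?M \<Longrightarrow> sigma_X B \<sigma> u \<in> ?L" by (rule sigmaX_L[OF sigma])
    show "\<And>u v. u \<in> ?M \<Longrightarrow> v \<in> ?M \<Longrightarrow> sigma_X B \<sigma> (u + v) = sigma_X B \<sigma> u + sigma_X B \<sigma> v"
      by (rule sigmaX_add[OF sigma])
    show "\<And>x. x \<in> ?L \<Longrightarrow> p_map x \<in> ?M" by (rule p_M)
    show "\<And>x y. x \<in> ?L \<Longrightarrow> y \<in> ?L \<Longrightarrow> p_map (x + y) = p_map x + p_map y" by (rule p_add)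
    show "\<And>x. x \<in> ?L \<Longrightarrow> ?d0 (?d0 x) = 0" by (rule d0d0)
    show "\<And>u. u \<in> ?M \<Longrightarrow> ?d0 (sigma_X B \<sigma> u) = 0" by (rule d0sX[OF sigma])
    show "\<And>x. x \<in> ?L \<Longrightarrow> ?d0 (?oh x) + ?oh (?d0 x) = x - sigma_X B \<sigma> (p_map x)"
      by (rule htpyL[OF h_lin h_deg sigma h_htpy h_sq h_sigma])
    show "\<And>x. x \<in> ?L \<Longrightarrow> ?oh (?oh x) = 0" by (rule hhL[OF h_lin h_deg sigma h_htpy h_sq h_sigma])
    show "\<And>u. u \<in> ?M \<Longrightarrow> ?oh (sigma_X B \<sigma> u) = 0" by (rule hsX[OF h_lin h_deg sigma h_htpy h_sq h_sigma])
    show "\<And>x. x \<in> ?L \<Longrightarrow> p_map (?oh x) = 0"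
    proof -
      fix x assume x: "x \<in> ?L"
      have "filt (Suc 0) (?oh x)" by (rule oh_filt[OF h_lin h_deg x filt0])
      then show "p_map (?oh x) = 0" by (intro p_filt) simp
    qed
    show "\<And>x. x \<in> ?L \<Longrightarrow> p_map (?mu (?oh x)) = 0"
    proof -
      fix x assume x: "x \<in> ?L"
      have "filt (Suc 0) (?oh x)" by (rule oh_filt[OF h_lin h_deg x filt0])
      then have "filt (Suc 0) (?mu (?oh x))" by (rule mu_filt)
      then show "p_map (?mu (?oh x)) = 0" by (intro p_filt) simp
    qed
    show "\<And>x. x \<in> ?L \<Longrightarrow> ?d0 (?d0 x) + ?d0 (?mu x) + ?mu (?d0 x) + ?mu (?mu x) = ?Us x"
    proof -
      fix x assume x: "x \<in> ?L"
      have "d_L B par D n a b (d_L B par D n a b x) = ?Us x" using dL_sq[OF MF x] W_def by simp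
      moreover have "d_L B par D n a b (d_L B par D n a b x) = ?d0 (?d0 x) + ?d0 (?mu x) + (?mu (?d0 x) + ?mu (?mu x))"
        unfolding d_L_def by (simp add: d0_add[OF d0_L[OF x] mu_L[OF x]] mu_add[OF d0_L[OF x] mu_L[OF x]])
      ultimately show "?d0 (?d0 x) + ?d0 (?mu x) + ?mu (?d0 x) + ?mu (?mu x) = ?Us x" by (simp add: add.assoc)
    qed
    show "\<And>x. x \<in> ?L \<Longrightarrow> ?oh (?Us x) = ?Us (?oh x)"
      using oh_scal[OF h_lin h_deg, of _ B par s0] s0 by simp
    show "\<And>x. x \<in> ?L \<Longrightarrow> ((\<lambda>z. ?oh (?mu z))^^Suc n) x = 0"
      using filtAm filt_nil by blast
  qed
  have Aeq: "P.A = (\<lambda>z. ?oh (?mu z))" by (simp add: fun_eq_iff P.A_def)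
  have sinf: "sigma_inf B par D n a h \<sigma> = (\<lambda>y. P.T (sigma_X B \<sigma> y))"
  proof (rule ext)
    fix y
    have c: "odd_ext B par h \<circ> ?mu = P.A" by (simp add: fun_eq_iff P.A_def)
    show "sigma_inf B par D n a h \<sigma> y = P.T (sigma_X B \<sigma> y)"
      unfolding sigma_inf_def P.T_def c by (rule sum.cong) (auto simp: sg_def fun_eq_iff)
  qed
  have TL: "\<And>x. x \<in> ?L \<Longrightarrow> P.T x \<in> ?L" by (rule P.T_Lc)
  have Tscal: "P.T (\<lambda>e I. \<phi> s * x e I) = (\<lambda>e I. \<phi> s * P.T x e I)" if x: "x \<in> ?L" for x s
  proof (rule P.T_comm[OF _ _ _ x])
    show "\<And>x. x \<in> ?L \<Longrightarrow> (\<lambda>e I. \<phi> s * x e I) \<in> ?L" by (rule L_scal)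
    show "\<And>x y. x \<in> ?L \<Longrightarrow> y \<in> ?L \<Longrightarrow> (\<lambda>e I. \<phi> s * (x + y) e I) = (\<lambda>e I. \<phi> s * x e I) + (\<lambda>e I. \<phi> s * y e I)"
      by (simp add: fun_eq_iff algebra_simps)
    show "\<And>x. x \<in> ?L \<Longrightarrow> P.A (\<lambda>e I. \<phi> s * x e I) = (\<lambda>e I. \<phi> s * P.A x e I)"
      unfolding Aeq by (simp add: mu_scal oh_scal[OF h_lin h_deg mu_L])
  qed
  have Tpar: "L_homog B par q (P.T x)" if x: "x \<in> ?L" and q: "L_homog B par q x" for x q
  proof (rule P.T_pres[where Pr="L_homog B par q", OF _ _ _ _ x q])
    show "\<And>x. x \<in> ?L \<Longrightarrow> L_homog B par q x \<Longrightarrow> L_homog B par q (P.A x)"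
      unfolding Aeq using oh_par[OF h_lin h_deg mu_L mu_par[OF MF]] by fastforce
  qed (auto simp: L_homog_def)
  define hinf where "hinf = (\<lambda>z. P.T (?oh z))"
  have dLeq: "d_L B par D n a b z = ?d0 z + ?mu z" for z by (simp add: d_L_def)
  have c1: "slin_LL \<phi> B n (d_L B par D n a b)"
    unfolding slin_LL_def by (auto simp: dL_L dL_add dL_scal)
  have c2: "\<forall>q. \<forall>z\<in>?L. L_homog B par q z \<longrightarrow> L_homog B par (\<not> q) (d_L B par D n a b z)"
    using dL_par[OF MF] by blast
  have c3: "\<forall>z\<in>?L. d_L B par D n a b (d_L B par D n a b z) = (\<lambda>e I. (V + W) * z e I)"
    using dL_sq[OF MF] W_def by blast
  have c4: "slin_MM \<phi> ?Q B (dX_M B D)"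
    unfolding slin_MM_def by (auto simp: dX_M_M dXM_eq[OF fin] dX_M_add dXM_scal M_eq_refl)
  have c5: "\<forall>q. \<forall>y\<in>?M. M_homog B par q y \<longrightarrow> M_homog B par (\<not> q) (dX_M B D y)"
    using dXM_par[OF MF] by blast
  have c6: "\<forall>y\<in>?M. M_eq ?Q B (dX_M B D (dX_M B D y)) (\<lambda>e. (V + W) * y e)"
    using dXM_sq[OF MF] W_def by blast
  have c7: "slin_ML \<phi> ?Q B n (\<lambda>y. P.T (sigma_X B \<sigma> y))"
    unfolding slin_ML_def
    by (auto simp: TL sigmaX_L[OF sigma] sX_eq[OF sigma] sigmaX_add[OF sigma] P.T_add sX_scal[OF sigma] Tscal)
  have c8: "\<forall>q. \<forall>y\<in>?M. M_homog B par q y \<longrightarrow> L_homog B par q (P.T (sigma_X B \<sigma> y))"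
    using Tpar sigmaX_L[OF sigma] sX_par[OF sigma] by blast
  have c9: "\<forall>y\<in>?M. d_L B par D n a b (P.T (sigma_X B \<sigma> y)) = P.T (sigma_X B \<sigma> (dX_M B D y))"
    using P.P1 sX_eq[OF sigma pmusX[OF sigma rep fin]] by (simp add: dLeq)
  have c10: "slin_LM \<phi> ?Q B n p_map"
    unfolding slin_LM_def by (auto simp: p_M p_add p_scal M_eq_refl)
  have c11: "\<forall>q. \<forall>z\<in>?L. L_homog B par q z \<longrightarrow> M_homog B par q (p_map z)"
    using p_par by blast
  have c12: "\<forall>z\<in>?L. M_eq ?Q B (p_map (d_L B par D n a b z)) (dX_M B D (p_map z))"
    using p_dL[OF fin] by blast
  have c13: "\<forall>y\<in>?M. M_eq ?Q B (p_map (P.T (sigma_X B \<sigma> y))) y"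
  proof
    fix y assume "y \<in> ?M"
    have e: "p_map (P.T (sigma_X B \<sigma> y)) = p_map (sigma_X B \<sigma> y)" by (rule P.P3[OF sigmaX_L[OF sigma]])
    show "M_eq ?Q B (p_map (P.T (sigma_X B \<sigma> y))) y"
      unfolding e M_eq_def using rep by (simp add: p_map_def ext_proj_def sigma_app)
  qed
  have c14: "slin_LL \<phi> B n hinf"
    unfolding slin_LL_def hinf_def
    by (auto simp: TL oh_L[OF h_lin h_deg] oh_add[OF h_lin h_deg] P.T_add oh_scal[OF h_lin h_deg] Tscal)
  have c15: "\<forall>q. \<forall>z\<in>?L. L_homog B par q z \<longrightarrow> L_homog B par (\<not> q) (hinf z)"
    unfolding hinf_def using Tpar oh_L[OF h_lin h_deg] oh_par[OF h_lin h_deg] by blast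
  have c16: "\<forall>z\<in>?L. d_L B par D n a b (hinf z) + hinf (d_L B par D n a b z) = z - P.T (sigma_X B \<sigma> (p_map z))"
    unfolding hinf_def dLeq using P.P2 by blast
  show ?thesis
    unfolding retract_datum_def sinf
    by (rule exI[where x=hinf]) (intro conjI c1 c2 c3 c4 c5 c6 c7 c8 c9 c10 c11 c12 c13 c14 c15 c16)
qed

end
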